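(* Let $q$ be such that $1/q$ is a prime power and set $\Bbbk:=\mathbb{F}_{1/q}$. Let $\lambda$ be a partition of $n$ and let $N\in\mathfrak{gl}_n(\Bbbk)$ be nilpotent with $\mathrm{JF}(N)=\lambda$. Let $\alpha=(\alpha_1,\dots,\alpha_k)$ be a weak composition of $n$. (i) For every semistandard tableau $T$ of shape $\lambda$ and content $\alpha$, $$\mathrm{wt}_q(T)=q^{n(\lambda)-n(\alpha)}\,\big|\{F\in\mathrm{Fl}_\alpha : F \text{ is strictly compatible with } N \text{ and } \mathrm{JF}(N;F)=T\}\big|.$$ (ii) Consequently, the coefficient of $x_1^{\alpha_1}\cdots x_k^{\alpha_k}$ in $W_\lambda(\mathbf{x};q)$ equals $q^{n(\lambda)-n(\alpha)}\,|\{F\in\mathrm{Fl}_\alpha : F\text{ is strictly compatible with }N\}|$.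
   Context: A weak composition of $n$ is a finite sequence $\alpha=(\alpha_1,\dots,\alpha_k)$ of nonnegative integers summing to $n$; for it, $n(\alpha):=\sum_i\binom{\alpha_i}{2}$ (the same formula defines $n(\lambda)$ for a partition $\lambda$). For a nilpotent endomorphism $N$ of a finite-dimensional vector space, $\mathrm{JF}(N)$ denotes the partition $\lambda$ with $\lambda_1+\cdots+\lambda_i=\dim\ker(N^i)$ for all $i\ge0$ (equivalently the conjugate of the partition of Jordan block sizes). $\mathrm{Fl}_\alpha$ is the set of chains $F=(0=F_0\subseteq F_1\subseteq\cdots\subseteq F_k=\Bbbk^n)$ of subspaces with $\dim F_i=\alpha_1+\cdots+\alpha_i$. $F$ and $N\in\mathfrak{gl}_n$ are strictly compatible if $N(F_i)\subseteq F_{i-1}$ for $1\le i\le k$; then $\mathrm{JF}(N;F)$ is the semistandard tableau $T$ of shape $\mathrm{JF}(N)$ and content $\alpha$ such that the boxes containing entries $\le i$ form the shape $T^{(i)}=\mathrm{JF}(N|_{F_i})$ for each $i$ (this is well-defined). For a semistandard tableau $T$, $T^{(j)}$ is the partition formed by the boxes with entries $\le j$ ($T^{(0)}=\varnothing$), with parts $T^{(j)}_i$. Define $[m]_q=1+q+\cdots+q^{m-1}$, $[m]_q!=[m]_q[m-1]_q\cdots[1]_q$, $\binom{m}{r}_q=\frac{[m]_q!}{[r]_q![m-r]_q!}$. The $q$-weight is $\mathrm{wt}_q(T)=\prod_{i,j\ge1}\binom{T^{(j)}_i-T^{(j)}_{i+1}}{T^{(j)}_i-T^{(j-1)}_i}_q$,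 and the $q$-Whittaker function is $W_\lambda(\mathbf{x};q)=\sum_{T}\mathrm{wt}_q(T)\prod_i x_i^{\#\{i\text{'s in }T\}}$, summed over semistandard tableaux $T$ of shape $\lambda$ with entries in $\mathbb{Z}_{>0}$. *)

theory Defs
  imports "HOL-Analysis.Analysis" "HOL-Library.Groups_Big_Fun"
begin

text \<open>Vectors in k^n are elements of type 'k^'n (n = CARD('n)); matrices are 'k^'n^'n,
  acting on vectors by (*v). Dimension of subspaces is vec.dim.\<close>

definition nilpotent_mat :: "'k::field^'n^'n \<Rightarrow> bool" where
  "nilpotent_mat N \<longleftrightarrow> (\<exists>m. ((*v) N ^^ m) = (\<lambda>x. 0))"

definition ker_pow :: "'k::field^'n^'n \<Rightarrow> nat \<Rightarrow> ('k^'n) set" where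
  "ker_pow N m = {x. ((*v) N ^^ m) x = 0}"

text \<open>Partitions are functions nat => nat indexed from 1 (value 0 at index 0).\<close>
definition is_partition_of :: "(nat \<Rightarrow> nat) \<Rightarrow> nat \<Rightarrow> bool" where
  "is_partition_of lam n \<longleftrightarrow> lam 0 = 0 \<and> (\<forall>i\<ge>1. lam (i+1) \<le> lam i)
     \<and> finite {i. lam i \<noteq> 0} \<and> (\<Sum>i\<in>{i. lam i \<noteq> 0}. lam i) = n"

text \<open>JF(N|_V): parts lambda_1+...+lambda_i = dim ker((N|_V)^i) = dim (V \<inter> ker N^i).\<close>
definition JF_on :: "('k::field^'n) set \<Rightarrow> 'k^'n^'n \<Rightarrow> nat \<Rightarrow> nat" where
  "JF_on V N i = (if i = 0 then 0
     else vec.dim (V \<inter> ker_pow N i) - vec.dim (V \<inter> ker_pow N (i - 1)))"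

definition JF :: "'k::field^'n^'n \<Rightarrow> nat \<Rightarrow> nat" where
  "JF N = JF_on UNIV N"

text \<open>n(lambda) and n(alpha).\<close>
definition n_part :: "(nat \<Rightarrow> nat) \<Rightarrow> nat" where
  "n_part lam = (\<Sum>i\<in>{i. lam i \<noteq> 0}. lam i choose 2)"

definition n_comp :: "nat list \<Rightarrow> nat" where
  "n_comp alpha = sum_list (map (\<lambda>a. a choose 2) alpha)"

text \<open>Tableaux: T i j is the entry in row i, column j (both 1-indexed); 0 outside the shape.\<close>
definition in_shape :: "(nat \<Rightarrow> nat) \<Rightarrow> nat \<Rightarrow> nat \<Rightarrow> bool" where
  "in_shape lam i j \<longleftrightarrow> 1 \<le> i \<and> 1 \<le> j \<and> j \<le> lam i"

definition ssyt :: "(nat \<Rightarrow> nat) \<Rightarrow> (nat \<Rightarrow> nat \<Rightarrow> nat) \<Rightarrow> bool" where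
  "ssyt lam T \<longleftrightarrow> (\<forall>i j. in_shape lam i j \<longleftrightarrow> T i j \<noteq> 0)
     \<and> (\<forall>i j. in_shape lam i (j+1) \<longrightarrow> T i j \<le> T i (j+1))
     \<and> (\<forall>i j. in_shape lam (i+1) j \<longrightarrow> T i j < T (i+1) j)"

text \<open>Content alpha = (alpha_1,...,alpha_k): exactly alpha_m entries equal to m for m \<le> k,
  and no entries larger than k.\<close>
definition has_content :: "(nat \<Rightarrow> nat \<Rightarrow> nat) \<Rightarrow> nat list \<Rightarrow> bool" where
  "has_content T alpha \<longleftrightarrow> (\<forall>m\<ge>1. card {(i,j). 1 \<le> i \<and> 1 \<le> j \<and> T i j = m}
       = (if m \<le> length alpha then alpha ! (m - 1) else 0))"

definition ssyt_content :: "(nat \<Rightarrow> nat) \<Rightarrow> nat list \<Rightarrow> (nat \<Rightarrow> nat \<Rightarrow> nat) \<Rightarrow> bool" where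
  "ssyt_content lam alpha T \<longleftrightarrow> ssyt lam T \<and> has_content T alpha"

text \<open>T^(j)_i: number of boxes in row i with entry \<le> j.\<close>
definition subshape :: "(nat \<Rightarrow> nat \<Rightarrow> nat) \<Rightarrow> nat \<Rightarrow> nat \<Rightarrow> nat" where
  "subshape T j i = card {c. 1 \<le> c \<and> 0 < T i c \<and> T i c \<le> j}"

text \<open>q-numbers.\<close>
definition qint :: "real \<Rightarrow> nat \<Rightarrow> real" where
  "qint q m = (\<Sum>i<m. q ^ i)"

definition qfact :: "real \<Rightarrow> nat \<Rightarrow> real" where
  "qfact q m = (\<Prod>i\<in>{1..m}. qint q i)"

definition qbinom :: "real \<Rightarrow> nat \<Rightarrow> nat \<Rightarrow> real" where
  "qbinom q m r = (if r \<le> m then qfact q m / (qfact q r * qfact q (m - r)) else 0)"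

text \<open>wt_q(T): product over all i, j \<ge> 1 (finitely many factors differ from 1).\<close>
definition wt_q :: "real \<Rightarrow> (nat \<Rightarrow> nat \<Rightarrow> nat) \<Rightarrow> real" where
  "wt_q q T = Prod_any (\<lambda>(i,j). if 1 \<le> i \<and> 1 \<le> j then
       qbinom q (subshape T j i - subshape T j (i+1)) (subshape T j i - subshape T (j-1) i)
     else 1)"

text \<open>Partial flags Fl_alpha: lists F_0 ... F_k of subspaces.\<close>
definition Fl :: "nat list \<Rightarrow> (('k::field^'n) set) list set" where
  "Fl alpha = {F. length F = length alpha + 1
     \<and> (\<forall>i\<le>length alpha. vec.subspace (F ! i) \<and> vec.dim (F ! i) = sum_list (take i alpha))
     \<and> (\<forall>i<length alpha. F ! i \<subseteq> F ! (i+1))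
     \<and> F ! 0 = {0} \<and> F ! length alpha = UNIV}"

definition strictly_compatible :: "'k::field^'n^'n \<Rightarrow> ('k^'n) set list \<Rightarrow> bool" where
  "strictly_compatible N F \<longleftrightarrow> (\<forall>i. 1 \<le> i \<and> i < length F \<longrightarrow> (*v) N ` (F ! i) \<subseteq> F ! (i - 1))"

text \<open>JF(N;F) = T: for every i, the boxes of T with entries \<le> i form JF(N|_{F_i}).\<close>
definition JF_flag_is :: "'k::field^'n^'n \<Rightarrow> ('k^'n) set list \<Rightarrow> (nat \<Rightarrow> nat \<Rightarrow> nat) \<Rightarrow> bool" where
  "JF_flag_is N F T \<longleftrightarrow> (\<forall>i<length F. subshape T i = JF_on (F ! i) N)"

end

theory Submission
  imports Defs
begin

(* ---- part 1 ---- *)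


lemma card_span_insert:
  fixes B :: "('k::{field,finite}^'n) set"
  assumes "b \<notin> vec.span B"
  shows "card (vec.span (insert b B)) = CARD('k) * card (vec.span B)"
proof -
  let ?f = "\<lambda>(s, c::'k). s + c *s b"
  have inj: "inj_on ?f (vec.span B \<times> UNIV)"
  proof (rule inj_onI, clarsimp)
    fix s c s' c' assume s: "s \<in> vec.span B" "s' \<in> vec.span B" and e: "s + c *s b = s' + c' *s b"
    show "s = s' \<and> c = c'"
    proof (cases "c = c'")
      case True then show ?thesis using e by simp
    next
      case False
      have "(c - c') *s b = s' - s" using e by (simp add: algebra_simps vec.scale_left_diff_distrib)
      moreover have "inverse (c - c') *s ((c - c') *s b) = b" using False by (metis vec.scale_scale left_inverse right_minus_eq vec.scale_one)
      ultimately have "b = inverse (c - c') *s (s' - s)" by simp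
      moreover have "inverse (c - c') *s (s' - s) \<in> vec.span B"
        using s by (intro vec.span_scale vec.span_diff) auto
      ultimately show ?thesis using assms by simp
    qed
  qed
  have img: "?f ` (vec.span B \<times> UNIV) = vec.span (insert b B)"
  proof (rule set_eqI)
    fix x show "x \<in> ?f ` (vec.span B \<times> UNIV) \<longleftrightarrow> x \<in> vec.span (insert b B)"
      unfolding vec.span_insert
    proof
      assume "x \<in> ?f ` (vec.span B \<times> UNIV)"
      then obtain s c where "s \<in> vec.span B" "x = s + c *s b" by auto
      then show "x \<in> {x. \<exists>k. x - k *s b \<in> vec.span B}" by (intro CollectI exI[of _ c]) simp
    next
      assume "x \<in> {x. \<exists>k. x - k *s b \<in> vec.span B}"
      then obtain k where "x - k *s b \<in> vec.span B" by auto
      then show "x \<in> ?f ` (vec.span B \<times> UNIV)"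
        by (intro image_eqI[of _ _ "(x - k *s b, k)"]) auto
    qed
  qed
  have "card (vec.span (insert b B)) = card (vec.span B \<times> (UNIV::'k set))"
    using card_image[OF inj] img by simp
  also have "\<dots> = CARD('k) * card (vec.span B)" by (simp add: card_cartesian_product)
  finally show ?thesis .
qed

lemma card_span_indep:
  fixes B :: "('k::{field,finite}^'n) set"
  assumes "vec.independent B"
  shows "card (vec.span B) = CARD('k) ^ card B"
proof -
  have "finite B" using assms vec.finiteI_independent by auto
  then show ?thesis using assms
  proof (induction B rule: finite_induct)
    case empty then show ?case by simp
  next
    case (insert b B)
    have "vec.independent B" using insert.prems vec.independent_mono by blast
    moreover have "b \<notin> vec.span B"
      using insert.prems insert.hyps(2) by (metis vec.independent_insert)
    ultimately show ?case using insert card_span_insert[of b B] by simp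
  qed
qed

lemma card_subspace:
  fixes S :: "('k::{field,finite}^'n) set"
  assumes "vec.subspace S"
  shows "card S = CARD('k) ^ vec.dim S"
proof -
  obtain B where B: "B \<subseteq> S" "vec.independent B" "S \<subseteq> vec.span B" "card B = vec.dim S"
    using vec.basis_exists by blast
  have "vec.span B = S" using B assms vec.span_minimal by blast
  then show ?thesis using card_span_indep[OF B(2)] B(4) by simp
qed


(* ---- part 2 ---- *)


lemma card_fibers_const:
  assumes "finite A" "finite B" "g ` A \<subseteq> B" "\<And>y. y \<in> B \<Longrightarrow> card {x\<in>A. g x = y} = c"
  shows "card A = card B * c"
proof -
  have "A = (\<Union>y\<in>B. {x\<in>A. g x = y})" using assms(3) by auto
  moreover have "card (\<Union>y\<in>B. {x\<in>A. g x = y}) = (\<Sum>y\<in>B. card {x\<in>A. g x = y})"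
    by (rule card_UN_disjoint) (use assms(1,2) in auto)
  ultimately have "card A = (\<Sum>y\<in>B. card {x\<in>A. g x = y})" by simp
  also have "\<dots> = card B * c" using assms(4) by simp
  finally show ?thesis .
qed

lemma card_ge2_field: "2 \<le> CARD('k::{field,finite})"
proof -
  have "card {0::'k, 1} \<le> CARD('k)" by (rule card_mono) auto
  then show ?thesis by simp
qed

lemma lin_add: "(N::'k::field^'n^'n) *v (x + y) = N *v x + N *v y"
  by (simp add: matrix_vector_right_distrib)
lemma lin_scale: "(N::'k::field^'n^'n) *v (c *s x) = c *s (N *v x)"
  by (simp add: vec.scale)
lemma lin_zero: "(N::'k::field^'n^'n) *v 0 = 0"
  by simp

lemma subspace_image_N: "vec.subspace S \<Longrightarrow> vec.subspace ((*v) (N::'k::field^'n^'n) ` S)"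
  by (rule vec.subspace_image)

lemma funpow_lin: "Vector_Spaces.linear (*s) (*s) ((*v) (N::'k::field^'n^'n) ^^ i)"
proof (induction i)
  case 0 then show ?case by (simp add: vec.linear_id[unfolded id_def])
next
  case (Suc i) then show ?case
    using Vector_Spaces.linear_compose[OF Suc.IH matrix_vector_mul_linear_gen[of N]] by (simp add: o_def)
qed

lemma subspace_ker_pow: "vec.subspace (ker_pow (N::'k::field^'n^'n) i)"
  unfolding ker_pow_def using vec.linear_subspace_kernel[OF funpow_lin] .


(* ---- part 3 ---- *)


lemma ker1: "ker_pow N 1 = {x. N *v x = 0}" by (simp add: ker_pow_def)
lemma mem_ker_Suc0[simp]: "x \<in> ker_pow N (Suc 0) \<longleftrightarrow> N *v x = 0" by (simp add: ker_pow_def)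

lemma exp_inj_Q:
  assumes "CARD('k::{field,finite}) ^ a = CARD('k) ^ b" shows "a = b"
  using assms card_ge2_field[where 'k='k] by (simp add: power_inject_exp)

lemma rank_nullity_card:
  fixes N :: "'k::{field,finite}^'n^'n"
  assumes S: "vec.subspace S"
  shows "card S = card ((*v) N ` S) * card (S \<inter> ker_pow N 1)"
proof (rule card_fibers_const[where g="(*v) N"])
  fix y assume "y \<in> (*v) N ` S"
  then obtain s0 where s0: "s0 \<in> S" "y = N *v s0" by auto
  have "{x \<in> S. N *v x = y} = (\<lambda>z. s0 + z) ` (S \<inter> ker_pow N 1)"
  proof (rule set_eqI, rule iffI)
    fix x assume x: "x \<in> {x \<in> S. N *v x = y}"
    have "x - s0 \<in> S" using x s0 S vec.subspace_diff by auto
    moreover have "N *v (x - s0) = 0" using x s0 by (simp add: matrix_vector_mult_diff_distrib)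
    ultimately show "x \<in> (\<lambda>z. s0 + z) ` (S \<inter> ker_pow N 1)"
      by (intro image_eqI[of _ _ "x - s0"]) (auto simp: ker1)
  next
    fix x assume "x \<in> (\<lambda>z. s0 + z) ` (S \<inter> ker_pow N 1)"
    then obtain z where z: "z \<in> S" "N *v z = 0" "x = s0 + z" by (auto simp: ker1)
    then show "x \<in> {x \<in> S. N *v x = y}" using s0 S vec.subspace_add by (auto simp: lin_add)
  qed
  then show "card {x \<in> S. N *v x = y} = card (S \<inter> ker_pow N 1)"
    by (simp add: card_image)
qed auto

lemma rank_nullity:
  fixes N :: "'k::{field,finite}^'n^'n"
  assumes S: "vec.subspace S"
  shows "vec.dim ((*v) N ` S) + vec.dim (S \<inter> ker_pow N 1) = vec.dim S"
proof -
  have s1: "vec.subspace ((*v) N ` S)" using S by (rule subspace_image_N)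
  have s2: "vec.subspace (S \<inter> ker_pow N 1)" using S subspace_ker_pow vec.subspace_inter by blast
  have "CARD('k) ^ vec.dim S = CARD('k) ^ (vec.dim ((*v) N ` S) + vec.dim (S \<inter> ker_pow N 1))"
    using rank_nullity_card[OF S, of N] card_subspace[OF S] card_subspace[OF s1] card_subspace[OF s2]
    by (simp add: power_add)
  then show ?thesis using exp_inj_Q by metis
qed


(* ---- part 4 ---- *)


definition indep_mod :: "('k::field^'n) set \<Rightarrow> ('k^'n) list \<Rightarrow> bool" where
  "indep_mod B vs \<longleftrightarrow> (\<forall>j<length vs. vs ! j \<notin> vec.span (B \<union> set (take j vs)))"

definition Ptup :: "('k::field^'n) set \<Rightarrow> ('k^'n) set \<Rightarrow> nat \<Rightarrow> ('k^'n) list set" where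
  "Ptup A B d = {vs. length vs = d \<and> set vs \<subseteq> A \<and> indep_mod B vs}"

definition prodQ :: "nat \<Rightarrow> nat \<Rightarrow> nat \<Rightarrow> nat \<Rightarrow> nat" where
  "prodQ Q a b d = (\<Prod>j<d. Q ^ a - Q ^ (b + j))"

lemma indep_mod_Nil[simp]: "indep_mod B []" by (simp add: indep_mod_def)

lemma indep_mod_snoc:
  "indep_mod B (vs @ [v]) \<longleftrightarrow> indep_mod B vs \<and> v \<notin> vec.span (B \<union> set vs)"
  unfolding indep_mod_def
  by (auto simp: nth_append less_Suc_eq)

lemma indep_mod_mono:
  assumes "indep_mod B vs" "Y \<subseteq> B" shows "indep_mod Y vs"
  using assms unfolding indep_mod_def
  by (meson Un_mono order_refl subsetD vec.span_mono)

lemma dim_indep_mod: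
  assumes "vec.subspace B" "indep_mod B vs"
  shows "vec.dim (vec.span (B \<union> set vs)) = vec.dim B + length vs"
  using assms(2)
proof (induction vs rule: rev_induct)
  case Nil then show ?case using assms(1) by simp
next
  case (snoc v vs)
  then have i: "indep_mod B vs" "v \<notin> vec.span (B \<union> set vs)" by (auto simp: indep_mod_snoc)
  have "B \<union> set (vs @ [v]) = insert v (B \<union> set vs)" by auto
  then show ?case using snoc.IH[OF i(1)] i(2) by (simp add: vec.dim_insert)
qed

lemma finite_Ptup[simp]: "finite (Ptup (A::('k::{field,finite}^'n) set) B d)"
proof -
  have "Ptup A B d \<subseteq> {xs. set xs \<subseteq> UNIV \<and> length xs = d}" by (auto simp: Ptup_def)
  then show ?thesis using finite_lists_length_eq[of "UNIV::('k^'n) set" d] finite_subset by auto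
qed

lemma card_Ptup:
  fixes A B :: "('k::{field,finite}^'n) set"
  assumes A: "vec.subspace A" and B: "vec.subspace B" and BA: "B \<subseteq> A"
  shows "card (Ptup A B d) = prodQ CARD('k) (vec.dim A) (vec.dim B) d"
proof (induction d)
  case 0
  have "Ptup A B 0 = {[]}" by (auto simp: Ptup_def)
  then show ?case by (simp add: prodQ_def)
next
  case (Suc d)
  have "card (Ptup A B (Suc d)) = card (Ptup A B d) * (CARD('k) ^ vec.dim A - CARD('k) ^ (vec.dim B + d))"
  proof (rule card_fibers_const[where g=butlast])
    show "butlast ` Ptup A B (Suc d) \<subseteq> Ptup A B d"
    proof
      fix ws assume "ws \<in> butlast ` Ptup A B (Suc d)"
      then obtain vs where vs: "vs \<in> Ptup A B (Suc d)" "ws = butlast vs" by auto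
      then have "vs \<noteq> []" by (auto simp: Ptup_def)
      then have "vs = butlast vs @ [last vs]" by simp
      then show "ws \<in> Ptup A B d" using vs
        by (auto simp: Ptup_def indep_mod_snoc dest: in_set_butlastD) (metis indep_mod_snoc)
    qed
  next
    fix ws assume ws: "ws \<in> Ptup A B d"
    let ?S = "vec.span (B \<union> set ws)"
    have sub: "?S \<subseteq> A" using ws A BA by (intro vec.span_minimal) (auto simp: Ptup_def)
    have "{vs \<in> Ptup A B (Suc d). butlast vs = ws} = (\<lambda>v. ws @ [v]) ` (A - ?S)"
    proof (rule set_eqI, rule iffI)
      fix vs assume vs: "vs \<in> {vs \<in> Ptup A B (Suc d). butlast vs = ws}"
      then have "vs \<noteq> []" by (auto simp: Ptup_def)
      then have e: "vs = ws @ [last vs]" using vs by (metis (mono_tags) append_butlast_last_id mem_Collect_eq)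
      have p: "set vs \<subseteq> A" "indep_mod B vs" using vs by (auto simp: Ptup_def)
      have "indep_mod B (ws @ [last vs])" using p(2) e by metis
      then have "last vs \<notin> ?S" by (simp add: indep_mod_snoc)
      moreover have "last vs \<in> A" using p(1) \<open>vs \<noteq> []\<close> by auto
      ultimately have "last vs \<in> A - ?S" by blast
      then show "vs \<in> (\<lambda>v. ws @ [v]) ` (A - ?S)" using e by blast
    next
      fix vs assume "vs \<in> (\<lambda>v. ws @ [v]) ` (A - ?S)"
      then obtain v where "v \<in> A - ?S" "vs = ws @ [v]" by auto
      then show "vs \<in> {vs \<in> Ptup A B (Suc d). butlast vs = ws}" using ws
        by (auto simp: Ptup_def indep_mod_snoc)
    qed
    moreover have "card ((\<lambda>v. ws @ [v]) ` (A - ?S)) = card (A - ?S)"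
      by (rule card_image) (auto simp: inj_on_def)
    moreover have "card (A - ?S) = card A - card ?S" using sub by (simp add: card_Diff_subset finite_subset)
    moreover have "card ?S = CARD('k) ^ (vec.dim B + d)"
      using card_subspace[of ?S] dim_indep_mod[OF B] ws by (simp add: Ptup_def)
    ultimately show "card {vs \<in> Ptup A B (Suc d). butlast vs = ws} = CARD('k) ^ vec.dim A - CARD('k) ^ (vec.dim B + d)"
      using card_subspace[OF A] by simp
  qed auto
  then show ?case using Suc by (simp add: prodQ_def)
qed


(* ---- part 5 ---- *)


definition fam :: "('k::field^'n) set \<Rightarrow> ('k^'n) set \<Rightarrow> ('k^'n) set \<Rightarrow> nat \<Rightarrow> ('k^'n) set set" where
  "fam A B Y d = {X. vec.subspace X \<and> Y \<subseteq> X \<and> X \<subseteq> A \<and> X \<inter> B = Y \<and> vec.dim X = vec.dim Y + d}"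

lemma span_eq_subspace: "vec.subspace S \<Longrightarrow> vec.span S = S"
  by simp

lemma count_fam:
  fixes A B Y :: "('k::{field,finite}^'n) set"
  assumes A: "vec.subspace A" and B: "vec.subspace B" and Y: "vec.subspace Y"
    and YB: "Y \<subseteq> B" and BA: "B \<subseteq> A"
  shows "prodQ CARD('k) (vec.dim A) (vec.dim B) d =
         card (fam A B Y d) * prodQ CARD('k) (vec.dim Y + d) (vec.dim Y) d"
proof -
  let ?g = "\<lambda>vs. vec.span (Y \<union> set vs)"
  have "card (Ptup A B d) = card (fam A B Y d) * prodQ CARD('k) (vec.dim Y + d) (vec.dim Y) d"
  proof (rule card_fibers_const[where g="?g"])
    show "finite (fam A B Y d)" by simp
    show "?g ` Ptup A B d \<subseteq> fam A B Y d"
    proof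
      fix X assume "X \<in> ?g ` Ptup A B d"
      then obtain vs where vs: "length vs = d" "set vs \<subseteq> A" "indep_mod B vs" and X: "X = ?g vs"
        by (auto simp: Ptup_def)
      have sX: "vec.subspace X" using X by simp
      have YX: "Y \<subseteq> X" using X vec.span_superset by blast
      have XA: "X \<subseteq> A" unfolding X using vs(2) YB BA A by (intro vec.span_minimal) auto
      have dX: "vec.dim X = vec.dim Y + d"
        using dim_indep_mod[OF Y indep_mod_mono[OF vs(3) YB]] X vs(1) by simp
      have dBvs: "vec.dim (vec.span (B \<union> set vs)) = vec.dim B + d"
        using dim_indep_mod[OF B vs(3)] vs(1) by simp
      let ?XB = "{x + y |x y. x \<in> X \<and> y \<in> B}"
      have "vec.span (B \<union> set vs) \<subseteq> ?XB"
      proof (rule vec.span_minimal)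
        show "vec.subspace ?XB" using sX B by (rule vec.subspace_sums)
        show "B \<union> set vs \<subseteq> ?XB"
        proof
          fix z assume "z \<in> B \<union> set vs"
          then show "z \<in> ?XB"
          proof
            assume "z \<in> B" then show ?thesis using vec.subspace_0[OF sX] by force
          next
            assume "z \<in> set vs"
            then have "z \<in> X" using X vec.span_superset by blast
            then show ?thesis using vec.subspace_0[OF B] by force
          qed
        qed
      qed
      note subXB = this
      have "vec.dim B + d \<le> vec.dim ?XB" using vec.dim_subset[OF subXB] dBvs by simp
      moreover have "vec.dim ?XB + vec.dim (X \<inter> B) = vec.dim X + vec.dim B"
        using vec.dim_sums_Int[OF sX B] .
      ultimately have "vec.dim (X \<inter> B) \<le> vec.dim Y" using dX by linarith
      then have "Y = X \<inter> B"
        using YX YB Y sX B by (intro vec.subspace_dim_equal) (auto intro: vec.subspace_inter)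
      then show "X \<in> fam A B Y d" using sX YX XA dX by (auto simp: fam_def)
    qed
  next
    fix X assume Xf: "X \<in> fam A B Y d"
    then have sX: "vec.subspace X" and YX: "Y \<subseteq> X" and XA: "X \<subseteq> A" and XB: "X \<inter> B = Y"
      and dX: "vec.dim X = vec.dim Y + d" by (auto simp: fam_def)
    have "{vs \<in> Ptup A B d. ?g vs = X} = Ptup X Y d"
    proof (rule set_eqI, rule iffI)
      fix vs assume "vs \<in> {vs \<in> Ptup A B d. ?g vs = X}"
      then have vs: "length vs = d" "indep_mod B vs" "?g vs = X" by (auto simp: Ptup_def)
      have "set vs \<subseteq> ?g vs" using vec.span_superset[of "Y \<union> set vs"] by blast
      then have "set vs \<subseteq> X" using vs(3) by simp
      then show "vs \<in> Ptup X Y d" using vs indep_mod_mono[OF vs(2) YB] by (simp add: Ptup_def)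
    next
      fix vs assume "vs \<in> Ptup X Y d"
      then have vs: "length vs = d" "set vs \<subseteq> X" "indep_mod Y vs" by (auto simp: Ptup_def)
      have "indep_mod B vs" unfolding indep_mod_def
      proof (intro allI impI)
        fix j assume j: "j < length vs"
        let ?T = "set (take j vs)"
        show "vs ! j \<notin> vec.span (B \<union> ?T)"
        proof
          assume "vs ! j \<in> vec.span (B \<union> ?T)"
          then obtain u w where uw: "u \<in> vec.span B" "w \<in> vec.span ?T" "vs ! j = u + w"
            unfolding vec.span_Un by auto
          have TX: "?T \<subseteq> X" using vs(2) by (meson order_trans set_take_subset)
          have wX: "w \<in> X" using uw(2) vec.span_minimal[OF TX sX] by blast
          have vX: "vs ! j \<in> X" using vs(2) j by auto
          have "u = vs ! j - w" using uw(3) by simp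
          then have "u \<in> X" using vec.subspace_diff[OF sX vX wX] by simp
          moreover have "u \<in> B" using uw(1) B by (metis vec.span_eq_iff)
          ultimately have "u \<in> Y" using XB by blast
          then have "u \<in> vec.span (Y \<union> ?T)" using vec.span_superset[of "Y \<union> ?T"] by blast
          moreover have "w \<in> vec.span (Y \<union> ?T)" using uw(2) vec.span_mono[of ?T "Y \<union> ?T"] by blast
          ultimately have "vs ! j \<in> vec.span (Y \<union> ?T)" unfolding uw(3) by (rule vec.span_add)
          then show False using vs(3) j by (simp add: indep_mod_def)
        qed
      qed
      moreover have "set vs \<subseteq> A" using vs(2) XA by blast
      moreover have "?g vs = X"
      proof (rule vec.subspace_dim_equal)
        show "?g vs \<subseteq> X" using vs(2) YX sX by (intro vec.span_minimal) auto
        show "vec.dim X \<le> vec.dim (?g vs)" using dim_indep_mod[OF Y vs(3)] dX vs(1) by simp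
              show "vec.subspace (?g vs)" by simp
        show "vec.subspace X" by (rule sX)
      qed
      ultimately show "vs \<in> {vs \<in> Ptup A B d. ?g vs = X}" using vs(1) by (simp add: Ptup_def)
    qed
    then show "card {vs \<in> Ptup A B d. ?g vs = X} = prodQ CARD('k) (vec.dim Y + d) (vec.dim Y) d"
      using card_Ptup[OF sX Y YX] dX by simp
  qed simp
  then show ?thesis using card_Ptup[OF A B BA] by simp
qed


(* ---- part 6 ---- *)


lemma card_fibers_real:
  assumes "finite A" "finite B" "g ` A \<subseteq> B" "\<And>y. y \<in> B \<Longrightarrow> real (card {x\<in>A. g x = y}) = c"
  shows "real (card A) = real (card B) * c"
proof -
  have "A = (\<Union>y\<in>B. {x\<in>A. g x = y})" using assms(3) by auto
  moreover have "card (\<Union>y\<in>B. {x\<in>A. g x = y}) = (\<Sum>y\<in>B. card {x\<in>A. g x = y})"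
    by (rule card_UN_disjoint) (use assms(1,2) in auto)
  ultimately have "real (card A) = (\<Sum>y\<in>B. real (card {x\<in>A. g x = y}))" by simp
  also have "\<dots> = real (card B) * c" using assms(4) by simp
  finally show ?thesis .
qed

definition cstep :: "nat \<Rightarrow> nat \<Rightarrow> nat \<Rightarrow> nat \<Rightarrow> nat \<Rightarrow> real" where
  "cstep Q a b y d = real (prodQ Q a b d) / real (prodQ Q (y + d) y d)"

lemma prodQ_pos: "2 \<le> Q \<Longrightarrow> 0 < prodQ Q (y + d) y d"
  unfolding prodQ_def by (intro prod_pos) (auto intro!: power_strict_increasing)

lemma card_fam_real:
  fixes A B Y :: "('k::{field,finite}^'n) set"
  assumes "vec.subspace A" "vec.subspace B" "vec.subspace Y" "Y \<subseteq> B" "B \<subseteq> A"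
  shows "real (card (fam A B Y d)) = cstep CARD('k) (vec.dim A) (vec.dim B) (vec.dim Y) d"
proof -
  have p: "0 < prodQ CARD('k) (vec.dim Y + d) (vec.dim Y) d" using prodQ_pos card_ge2_field by blast
  have "real (prodQ CARD('k) (vec.dim A) (vec.dim B) d) =
        real (card (fam A B Y d)) * real (prodQ CARD('k) (vec.dim Y + d) (vec.dim Y) d)"
    using count_fam[OF assms] by (metis of_nat_mult)
  then show ?thesis using p by (simp add: cstep_def field_simps)
qed

definition Gch :: "(nat \<Rightarrow> ('k::field^'n) set) \<Rightarrow> (nat \<Rightarrow> nat) \<Rightarrow> nat \<Rightarrow> ('k^'n) set set" where
  "Gch A x s = {Z. vec.subspace Z \<and> A 0 \<subseteq> Z \<and> Z \<subseteq> A s \<and> (\<forall>i\<le>s. vec.dim (Z \<inter> A i) = x i)}"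

lemma card_Gch:
  fixes A :: "nat \<Rightarrow> ('k::{field,finite}^'n) set"
  assumes sA: "\<And>i. vec.subspace (A i)" and mA: "\<And>i. A i \<subseteq> A (Suc i)"
    and mx: "\<And>i. x i \<le> x (Suc i)" and x0: "x 0 = vec.dim (A 0)"
  shows "real (card (Gch A x s)) =
    (\<Prod>i<s. cstep CARD('k) (vec.dim (A (Suc i))) (vec.dim (A i)) (x i) (x (Suc i) - x i))"
proof (induction s)
  case 0
  have "Gch A x 0 = {A 0}" using sA x0 by (auto simp: Gch_def)
  then show ?case by simp
next
  case (Suc s)
  have mono: "A i \<subseteq> A j" if "i \<le> j" for i j using lift_Suc_mono_le[of A, OF mA that] .
  let ?d = "x (Suc s) - x s"
  let ?c = "cstep CARD('k) (vec.dim (A (Suc s))) (vec.dim (A s)) (x s) ?d"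
  have fib: "{Z \<in> Gch A x (Suc s). Z \<inter> A s = Y} = fam (A (Suc s)) (A s) Y ?d"
    if Y: "Y \<in> Gch A x s" for Y
  proof -
    have sY: "vec.subspace Y" and A0Y: "A 0 \<subseteq> Y" and YA: "Y \<subseteq> A s"
      and dY: "\<And>i. i \<le> s \<Longrightarrow> vec.dim (Y \<inter> A i) = x i" using Y by (auto simp: Gch_def)
    have dYs: "vec.dim Y = x s" using dY[of s] YA by (simp add: Int_absorb2)
    show ?thesis
    proof (rule set_eqI, rule iffI)
      fix Z assume "Z \<in> {Z \<in> Gch A x (Suc s). Z \<inter> A s = Y}"
      then have Z: "vec.subspace Z" "Z \<subseteq> A (Suc s)" "vec.dim (Z \<inter> A (Suc s)) = x (Suc s)" "Z \<inter> A s = Y"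
        by (auto simp: Gch_def)
      have "vec.dim Z = x (Suc s)" using Z(2,3) by (simp add: Int_absorb2)
      then show "Z \<in> fam (A (Suc s)) (A s) Y ?d" using Z dYs mx[of s] by (auto simp: fam_def)
    next
      fix Z assume "Z \<in> fam (A (Suc s)) (A s) Y ?d"
      then have Z: "vec.subspace Z" "Y \<subseteq> Z" "Z \<subseteq> A (Suc s)" "Z \<inter> A s = Y" "vec.dim Z = vec.dim Y + ?d"
        by (auto simp: fam_def)
      have "vec.dim (Z \<inter> A i) = x i" if i: "i \<le> Suc s" for i
      proof (cases "i = Suc s")
        case True then show ?thesis using Z(3,5) dYs mx[of s] by (simp add: Int_absorb2)
      next
        case False
        then have "i \<le> s" using i by simp
        then have "Z \<inter> A i = Y \<inter> A i" using Z(4) mono[of i s] by blast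
        then show ?thesis using dY \<open>i \<le> s\<close> by simp
      qed
      then show "Z \<in> {Z \<in> Gch A x (Suc s). Z \<inter> A s = Y}" using Z A0Y by (auto simp: Gch_def)
    qed
  qed
  have "real (card (Gch A x (Suc s))) = real (card (Gch A x s)) * ?c"
  proof (rule card_fibers_real[where g="\<lambda>Z. Z \<inter> A s"])
    show "finite (Gch A x (Suc s))" "finite (Gch A x s)" by simp_all
    show "(\<lambda>Z. Z \<inter> A s) ` Gch A x (Suc s) \<subseteq> Gch A x s"
    proof
      fix Y assume "Y \<in> (\<lambda>Z. Z \<inter> A s) ` Gch A x (Suc s)"
      then obtain Z where Z: "Z \<in> Gch A x (Suc s)" "Y = Z \<inter> A s" by auto
      have "vec.dim (Y \<inter> A i) = x i" if "i \<le> s" for i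
      proof -
        have "Y \<inter> A i = Z \<inter> A i" using Z(2) mono[OF that] by blast
        then show ?thesis using Z(1) that by (simp add: Gch_def)
      qed
      moreover have "vec.subspace Y" using Z sA by (simp add: Gch_def vec.subspace_inter)
      moreover have "A 0 \<subseteq> Y" using Z mono[of 0 s] by (auto simp: Gch_def)
      ultimately show "Y \<in> Gch A x s" using Z(2) by (auto simp: Gch_def)
    qed
  next
    fix Y assume Y: "Y \<in> Gch A x s"
    have sY: "vec.subspace Y" and YA: "Y \<subseteq> A s" using Y by (auto simp: Gch_def)
    have dYs: "vec.dim Y = x s" using Y YA by (simp add: Gch_def Int_absorb2) (metis Int_absorb2 order_refl)
    have "real (card (fam (A (Suc s)) (A s) Y ?d)) = ?c"
      using card_fam_real[OF sA sA sY YA mA] dYs by simp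
    then show "real (card {Z \<in> Gch A x (Suc s). Z \<inter> A s = Y}) = ?c"
      using fib[OF Y] by simp
  qed
  then show ?case using Suc by simp
qed


(* ---- part 7 ---- *)


abbreviation NV :: "'k::field^'n^'n \<Rightarrow> ('k^'n) set \<Rightarrow> ('k^'n) set" where
  "NV N U \<equiv> (*v) N ` U"

definition Ach :: "'k::field^'n^'n \<Rightarrow> ('k^'n) set \<Rightarrow> nat \<Rightarrow> ('k^'n) set" where
  "Ach N U i = {x + y |x y. x \<in> U \<inter> ker_pow N i \<and> y \<in> NV N U}"

lemma funpow_N_zero: "((*v) (N::'k::field^'n^'n) ^^ i) 0 = 0"
  by (induction i) auto

lemma ker_pow_0: "ker_pow N 0 = {0}" by (auto simp: ker_pow_def)

lemma ker_pow_Suc_iff: "x \<in> ker_pow N (Suc i) \<longleftrightarrow> N *v x \<in> ker_pow N i"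
  by (simp add: ker_pow_def funpow_Suc_right del: funpow.simps)

lemma ker_pow_mono_Suc: "ker_pow (N::'k::field^'n^'n) i \<subseteq> ker_pow N (Suc i)"
  by (auto simp: ker_pow_def)

lemma ker_pow_mono: "i \<le> j \<Longrightarrow> ker_pow (N::'k::field^'n^'n) i \<subseteq> ker_pow N j"
  using lift_Suc_mono_le[of "ker_pow N", OF ker_pow_mono_Suc] by blast

lemma ker_pow_full:
  assumes "((*v) (N::'k::field^'n^'n) ^^ m) = (\<lambda>x. 0)" "m \<le> i"
  shows "ker_pow N i = UNIV"
proof -
  have "((*v) N ^^ i) x = 0" for x
  proof -
    have "((*v) N ^^ i) = ((*v) N ^^ (i - m)) \<circ> ((*v) N ^^ m)"
      using assms(2) by (metis funpow_add le_add_diff_inverse2)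
    then show ?thesis using assms(1) funpow_N_zero by simp
  qed
  then show ?thesis by (auto simp: ker_pow_def)
qed

lemma NV_ker: "NV N U \<inter> ker_pow N i = NV N (U \<inter> ker_pow N (Suc i))"
  by (auto simp: ker_pow_Suc_iff)

context
  fixes N :: "'k::{field,finite}^'n^'n" and U :: "('k^'n) set"
  assumes sU: "vec.subspace U" and NUU: "NV N U \<subseteq> U"
begin

lemma sNU: "vec.subspace (NV N U)" using subspace_image_N[OF sU] .

lemma sUK: "vec.subspace (U \<inter> ker_pow N i)"
  using sU subspace_ker_pow vec.subspace_inter by blast

lemma sAch: "vec.subspace (Ach N U i)"
  unfolding Ach_def by (rule vec.subspace_sums[OF sUK sNU])

lemma Ach_mono: "Ach N U i \<subseteq> Ach N U (Suc i)"
  unfolding Ach_def using ker_pow_mono_Suc by blast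

lemma Ach_0: "Ach N U 0 = NV N U"
proof -
  have "0 \<in> U" using sU vec.subspace_0 by blast
  then show ?thesis unfolding Ach_def ker_pow_0 by force
qed

lemma Ach_sub: "Ach N U i \<subseteq> U"
  unfolding Ach_def using NUU sU vec.subspace_add by blast

lemma Ach_full:
  assumes "((*v) N ^^ m) = (\<lambda>x. 0)" "m \<le> i"
  shows "Ach N U i = U"
proof
  show "Ach N U i \<subseteq> U" by (rule Ach_sub)
  show "U \<subseteq> Ach N U i"
  proof
    fix u assume "u \<in> U"
    moreover have "0 \<in> NV N U" using sU vec.subspace_0 by (metis image_eqI lin_zero)
    ultimately show "u \<in> Ach N U i" unfolding Ach_def ker_pow_full[OF assms] by force
  qed
qed

lemma dim_NU: "vec.dim (NV N U) + vec.dim (U \<inter> ker_pow N 1) = vec.dim U"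
  using rank_nullity[OF sU] .

lemma dim_NUK: "vec.dim (NV N U \<inter> ker_pow N i) + vec.dim (U \<inter> ker_pow N 1) = vec.dim (U \<inter> ker_pow N (Suc i))"
proof -
  have "(U \<inter> ker_pow N (Suc i)) \<inter> ker_pow N 1 = U \<inter> ker_pow N 1"
    using ker_pow_mono[of 1 "Suc i" N] by auto
  then show ?thesis using rank_nullity[OF sUK, of N "Suc i"] NV_ker by metis
qed

lemma W_Ach:
  assumes W: "vec.subspace W" "NV N U \<subseteq> W" "W \<subseteq> U"
  shows "vec.dim (W \<inter> Ach N U i) + vec.dim (U \<inter> ker_pow N (Suc i)) = vec.dim (W \<inter> ker_pow N i) + vec.dim U"
proof -
  have sWK: "vec.subspace (W \<inter> ker_pow N i)" using W(1) subspace_ker_pow vec.subspace_inter by blast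
  have e1: "W \<inter> Ach N U i = {x + y |x y. x \<in> W \<inter> ker_pow N i \<and> y \<in> NV N U}"
  proof
    show "W \<inter> Ach N U i \<subseteq> {x + y |x y. x \<in> W \<inter> ker_pow N i \<and> y \<in> NV N U}"
    proof
      fix z assume z: "z \<in> W \<inter> Ach N U i"
      then obtain x y where xy: "x \<in> U \<inter> ker_pow N i" "y \<in> NV N U" "z = x + y" unfolding Ach_def by blast
      have "x = z - y" using xy by simp
      then have "x \<in> W" using z xy(2) W vec.subspace_diff by (metis IntD1 subsetD)
      then show "z \<in> {x + y |x y. x \<in> W \<inter> ker_pow N i \<and> y \<in> NV N U}" using xy by blast
    qed
    show "{x + y |x y. x \<in> W \<inter> ker_pow N i \<and> y \<in> NV N U} \<subseteq> W \<inter> Ach N U i"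
      unfolding Ach_def using W vec.subspace_add by blast
  qed
  have e2: "(W \<inter> ker_pow N i) \<inter> NV N U = NV N U \<inter> ker_pow N i" using W by blast
  have "vec.dim (W \<inter> Ach N U i) + vec.dim (NV N U \<inter> ker_pow N i) = vec.dim (W \<inter> ker_pow N i) + vec.dim (NV N U)"
    using vec.dim_sums_Int[OF sWK sNU] e1 e2 by simp
  then show ?thesis using dim_NU dim_NUK[of i] by linarith
qed

lemma dim_Ach: "vec.dim (Ach N U i) + vec.dim (U \<inter> ker_pow N (Suc i)) = vec.dim (U \<inter> ker_pow N i) + vec.dim U"
  using W_Ach[OF sU NUU order_refl, of i] Ach_sub[of i] by (simp add: Int_absorb1)

end


(* ---- part 8 ---- *)


definition Msum :: "(nat \<Rightarrow> nat) \<Rightarrow> nat \<Rightarrow> nat" where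
  "Msum mu i = (\<Sum>j\<in>{1..i}. mu j)"

lemma Msum_0[simp]: "Msum mu 0 = 0" by (simp add: Msum_def)
lemma Msum_Suc[simp]: "Msum mu (Suc i) = Msum mu i + mu (Suc i)" by (simp add: Msum_def)

definition FamW :: "'k::field^'n^'n \<Rightarrow> ('k^'n) set \<Rightarrow> (nat \<Rightarrow> nat) \<Rightarrow> ('k^'n) set set" where
  "FamW N U mu = {W. vec.subspace W \<and> NV N U \<subseteq> W \<and> W \<subseteq> U \<and> JF_on W N = mu}"

lemma dimK0: "vec.dim (W \<inter> ker_pow (N::'k::field^'n^'n) 0) = 0"
  by (simp add: ker_pow_0)

lemma JF_on_iff:
  fixes N :: "'k::{field,finite}^'n^'n"
  assumes nil: "((*v) N ^^ m) = (\<lambda>x. 0)" and mu0: "mu 0 = 0" and mum: "\<And>j. m < j \<Longrightarrow> mu j = 0"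
  shows "JF_on W N = mu \<longleftrightarrow> (\<forall>i\<le>m. vec.dim (W \<inter> ker_pow N i) = Msum mu i)"
proof -
  let ?E = "\<lambda>i. vec.dim (W \<inter> ker_pow N i)"
  have Emono: "?E i \<le> ?E (Suc i)" for i
    by (intro vec.dim_subset) (use ker_pow_mono_Suc[of N i] in blast)
  have Efull: "?E i = ?E m" if "m \<le> i" for i
    using ker_pow_full[OF nil that] ker_pow_full[OF nil order_refl] by simp
  show ?thesis
  proof
    assume J: "JF_on W N = mu"
    have "?E i = Msum mu i" for i
    proof (induction i)
      case 0 then show ?case using dimK0 by simp
    next
      case (Suc i)
      have "mu (Suc i) = ?E (Suc i) - ?E i" using J[symmetric] by (simp add: JF_on_def)
      then show ?case using Suc Emono[of i] by simp
    qed
    then show "\<forall>i\<le>m. ?E i = Msum mu i" by simp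
  next
    assume H: "\<forall>i\<le>m. ?E i = Msum mu i"
    show "JF_on W N = mu"
    proof
      fix i show "JF_on W N i = mu i"
      proof (cases i)
        case 0 then show ?thesis by (simp add: JF_on_def mu0)
      next
        case (Suc j)
        show ?thesis
        proof (cases "Suc j \<le> m")
          case True
          then show ?thesis using H Suc by (simp add: JF_on_def)
        next
          case False
          then have "?E (Suc j) = ?E j" using Efull[of "Suc j"] Efull[of j] by simp
          then show ?thesis using Suc False mum[of "Suc j"] by (simp add: JF_on_def)
        qed
      qed
    qed
  qed
qed

definition xseq :: "'k::field^'n^'n \<Rightarrow> ('k^'n) set \<Rightarrow> (nat \<Rightarrow> nat) \<Rightarrow> nat \<Rightarrow> nat" where
  "xseq N U mu i = Msum mu i + vec.dim U - vec.dim (U \<inter> ker_pow N (Suc i))"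

context
  fixes N :: "'k::{field,finite}^'n^'n" and U :: "('k^'n) set"
  assumes sU: "vec.subspace U" and NUU: "NV N U \<subseteq> U"
begin


lemma DU_le: "vec.dim (U \<inter> ker_pow N i) \<le> vec.dim U"
  by (rule vec.dim_subset) blast

lemma FamW_Gch:
  assumes nil: "((*v) N ^^ m) = (\<lambda>x. 0)" and mu0: "mu 0 = 0" and mum: "\<And>j. m < j \<Longrightarrow> mu j = 0"
  shows "FamW N U mu = Gch (Ach N U) (xseq N U mu) m"
proof (rule set_eqI)
  fix W
  show "W \<in> FamW N U mu \<longleftrightarrow> W \<in> Gch (Ach N U) (xseq N U mu) m"
  proof (cases "vec.subspace W \<and> NV N U \<subseteq> W \<and> W \<subseteq> U")
    case False
    then show ?thesis
      using Ach_0[OF sU NUU] Ach_full[OF sU NUU nil order_refl] by (auto simp: FamW_def Gch_def)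
  next
    case True
    then have W: "vec.subspace W" "NV N U \<subseteq> W" "W \<subseteq> U" by auto
    have "vec.dim (W \<inter> Ach N U i) = xseq N U mu i \<longleftrightarrow> vec.dim (W \<inter> ker_pow N i) = Msum mu i" for i
      using W_Ach[OF sU NUU W, of i] DU_le[of "Suc i"] unfolding xseq_def by linarith
    then have "JF_on W N = mu \<longleftrightarrow> (\<forall>i\<le>m. vec.dim (W \<inter> Ach N U i) = xseq N U mu i)"
      using JF_on_iff[where N=N and m=m and mu=mu, OF nil mu0 mum] by simp
    then show ?thesis using W Ach_0[OF sU NUU] Ach_full[OF sU NUU nil order_refl]
      by (auto simp: FamW_def Gch_def)
  qed
qed

lemma card_FamW:
  assumes nil: "((*v) N ^^ m) = (\<lambda>x. 0)" and mu0: "mu 0 = 0" and mum: "\<And>j. m < j \<Longrightarrow> mu j = 0"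
    and inter: "\<And>i. vec.dim (U \<inter> ker_pow N (Suc (Suc i))) \<le> mu (Suc i) + vec.dim (U \<inter> ker_pow N (Suc i))"
  shows "real (card (FamW N U mu)) = (\<Prod>i<m. cstep CARD('k) (vec.dim (Ach N U (Suc i))) (vec.dim (Ach N U i))
            (xseq N U mu i) (xseq N U mu (Suc i) - xseq N U mu i))"
proof -
  have e: "FamW N U mu = Gch (Ach N U) (xseq N U mu) m" by (rule FamW_Gch[where m=m and mu=mu, OF nil mu0 mum])
  show ?thesis unfolding e
  proof (rule card_Gch)
    show "vec.subspace (Ach N U i)" for i by (rule sAch[OF sU NUU])
    show "Ach N U i \<subseteq> Ach N U (Suc i)" for i by (rule Ach_mono[OF sU NUU])
    show "xseq N U mu i \<le> xseq N U mu (Suc i)" for i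
      using inter[of i] DU_le[of "Suc i"] DU_le[of "Suc (Suc i)"] unfolding xseq_def by simp
    show "xseq N U mu 0 = vec.dim (Ach N U 0)"
      using Ach_0[OF sU NUU] dim_NU[OF sU NUU] unfolding xseq_def by simp
  qed
qed

end


(* ---- part 9 ---- *)


lemma qint_pos: "0 < q \<Longrightarrow> 1 \<le> i \<Longrightarrow> 0 < qint q i"
  unfolding qint_def by (intro sum_pos2[of _ 0]) auto

lemma qfact_pos: "0 < q \<Longrightarrow> 0 < qfact q m"
  unfolding qfact_def by (intro prod_pos qint_pos) auto

lemma qfact_Suc: "qfact q (Suc m) = qfact q m * qint q (Suc m)"
  by (simp add: qfact_def)

lemma qfact_split: "d \<le> m \<Longrightarrow> qfact q m = qfact q (m - d) * (\<Prod>j<d. qint q (m - j))"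
proof (induction d)
  case 0 then show ?case by simp
next
  case (Suc d)
  have "qfact q (m - d) = qfact q (m - Suc d) * qint q (m - d)"
    using Suc.prems qfact_Suc[of q "m - Suc d"] by (simp add: Suc_diff_Suc)
  then show ?case using Suc by (simp add: mult.assoc)
qed

lemma qbinom_prod:
  assumes "0 < q" "d \<le> m"
  shows "qbinom q m d = (\<Prod>j<d. qint q (m - j)) / (\<Prod>j<d. qint q (d - j))"
proof -
  have a: "qfact q d = (\<Prod>j<d. qint q (d - j))" using qfact_split[of d d q] by (simp add: qfact_def)
  show ?thesis using qfact_split[OF assms(2), of q] a qfact_pos[OF assms(1), of "m - d"] assms(2)
    by (simp add: qbinom_def)
qed

lemma qbinom_0: "0 < q \<Longrightarrow> qbinom q m 0 = 1"
  using qfact_pos[of q m] by (simp add: qbinom_def qfact_def[of q 0])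

lemma qbinom_sym: "r \<le> m \<Longrightarrow> qbinom q m (m - r) = qbinom q m r"
  by (simp add: qbinom_def mult.commute)

lemma geom_q:
  fixes Q :: real assumes Q: "1 < Q"
  shows "Q ^ (b + r) - Q ^ b = Q ^ (b + r) * (1 - 1 / Q) * qint (1 / Q) r"
proof -
  have "qint (1/Q) r = (1 - (1/Q) ^ r) / (1 - 1/Q)" unfolding qint_def
    using Q by (subst sum_gp_strict) auto
  moreover have "1 - 1/Q \<noteq> 0" using Q by simp
  ultimately have "(1 - 1 / Q) * qint (1 / Q) r = 1 - (1/Q)^r" by simp
  moreover have "Q ^ (b + r) * (1/Q)^r = Q ^ b" using Q by (simp add: power_add power_one_over)
  ultimately have "Q ^ (b + r) * ((1 - 1 / Q) * qint (1 / Q) r) = Q ^ (b + r) - Q ^ b"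
    by (simp add: right_diff_distrib)
  then show ?thesis by (simp only: mult.assoc)
qed

lemma prod_const_mult: "(\<Prod>j<d. (c::real) * f j) = c ^ d * (\<Prod>j<d. f j)"
  by (simp add: prod.distrib)

lemma cstep_formula:
  assumes Q: "2 \<le> Q" and ba: "b \<le> a"
  shows "cstep Q a b y d = real Q ^ (a * d) / real Q ^ ((y + d) * d) * qbinom (1 / real Q) (a - b) d"
proof (cases "d \<le> a - b")
  case True
  have Q1: "1 < real Q" using Q by simp
  have q0: "0 < 1 / real Q" using Q by simp
  have num: "real (prodQ Q a b d) = real Q ^ (a * d) * (1 - 1 / real Q) ^ d * (\<Prod>j<d. qint (1 / real Q) (a - b - j))"
  proof -
    have "real (Q ^ a - Q ^ (b + j)) = real Q ^ a * (1 - 1 / real Q) * qint (1 / real Q) (a - b - j)" if "j < d" for j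
    proof -
      have "b + j + (a - b - j) = a" using that True by simp
      moreover have "Q ^ (b + j) \<le> Q ^ a" using that True Q by (intro power_increasing) auto
      ultimately show ?thesis using geom_q[OF Q1, of "b + j" "a - b - j"] by (simp add: of_nat_diff)
    qed
    then have "real (prodQ Q a b d) = (\<Prod>j<d. real Q ^ a * (1 - 1 / real Q) * qint (1 / real Q) (a - b - j))"
      unfolding prodQ_def of_nat_prod by (intro prod.cong) auto
    also have "\<dots> = real Q ^ (a * d) * (1 - 1 / real Q) ^ d * (\<Prod>j<d. qint (1 / real Q) (a - b - j))"
      unfolding prod_const_mult by (simp add: power_mult_distrib power_mult mult.commute)
    finally show ?thesis .
  qed
  have den: "real (prodQ Q (y + d) y d) = real Q ^ ((y + d) * d) * (1 - 1 / real Q) ^ d * (\<Prod>j<d. qint (1 / real Q) (d - j))"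
  proof -
    have "real (Q ^ (y + d) - Q ^ (y + j)) = real Q ^ (y + d) * (1 - 1 / real Q) * qint (1 / real Q) (d - j)" if "j < d" for j
    proof -
      have "y + j + (d - j) = y + d" using that by simp
      moreover have "Q ^ (y + j) \<le> Q ^ (y + d)" using that Q by (intro power_increasing) auto
      ultimately show ?thesis using geom_q[OF Q1, of "y + j" "d - j"] by (simp add: of_nat_diff)
    qed
    then have "real (prodQ Q (y + d) y d) = (\<Prod>j<d. real Q ^ (y + d) * (1 - 1 / real Q) * qint (1 / real Q) (d - j))"
      unfolding prodQ_def of_nat_prod by (intro prod.cong) auto
    also have "\<dots> = real Q ^ ((y + d) * d) * (1 - 1 / real Q) ^ d * (\<Prod>j<d. qint (1 / real Q) (d - j))"
      unfolding prod_const_mult power_mult_distrib power_mult[symmetric] by simp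
    finally show ?thesis .
  qed
  have p1: "(\<Prod>j<d. qint (1 / real Q) (d - j)) > 0" using q0 by (intro prod_pos qint_pos) auto
  have p2: "(1 - 1 / real Q) ^ d > 0" using Q1 by simp
  have p3: "real Q ^ ((y + d) * d) > 0" using Q by simp
  show ?thesis unfolding cstep_def num den qbinom_prod[OF q0 True] using p1 p2 p3 Q
    by (simp add: field_simps)
next
  case False
  then have "a - b < d" by simp
  then have "prodQ Q a b d = 0" unfolding prodQ_def using ba
    by (intro prod_zero) (auto intro!: bexI[of _ "a - b"])
  moreover have "qbinom (1 / real Q) (a - b) d = 0" using False by (simp add: qbinom_def)
  ultimately show ?thesis by (simp add: cstep_def)
qed


(* ---- part 10 ---- *)


lemma choose2_int: "2 * int (n choose 2) = int n * (int n - 1)"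
proof (induction n)
  case 0 then show ?case by simp
next
  case (Suc n)
  have "Suc n choose 2 = n + (n choose 2)"
    using binomial_Suc_Suc[of n 1] by (simp add: numeral_2_eq_2)
  then show ?case using Suc by (simp add: algebra_simps)
qed

lemma exp_identity_gen:
  fixes lam mu :: "nat \<Rightarrow> nat"
  shows "2 * (\<Sum>i<s. (int (mu (Suc i)) - int (lam (Suc (Suc i)))) * (int (Msum lam (Suc i)) - int (Msum mu (Suc i))))
          + 2 * int (lam (Suc s)) * (int (Msum lam s) - int (Msum mu s))
        = (\<Sum>j<s. int (lam (Suc j)) * (int (lam (Suc j)) - 1) - int (mu (Suc j)) * (int (mu (Suc j)) - 1))
          - (int (Msum lam s) - int (Msum mu s)) * (int (Msum lam s) - int (Msum mu s) - 1)"
proof (induction s)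
  case 0 then show ?case by simp
next
  case (Suc s)
  then show ?case by (simp add: algebra_simps)
qed

lemma exp_identity:
  fixes lam mu :: "nat \<Rightarrow> nat"
  assumes "lam (Suc m) = 0"
    and "\<And>i. lam (Suc (Suc i)) \<le> mu (Suc i)"
    and "\<And>i. mu (Suc i) \<le> lam (Suc i)"
  shows "int (\<Sum>i<m. (mu (Suc i) - lam (Suc (Suc i))) * (Msum lam (Suc i) - Msum mu (Suc i)))
     = (\<Sum>j<m. int (lam (Suc j) choose 2)) - (\<Sum>j<m. int (mu (Suc j) choose 2))
       - int ((Msum lam m - Msum mu m) choose 2)"
proof -
  have Mle: "Msum mu s \<le> Msum lam s" for s
    unfolding Msum_def by (intro sum_mono) (metis assms(3) Suc_pred atLeastAtMost_iff not_one_le_zero neq0_conv)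
  have e1: "int (\<Sum>i<m. (mu (Suc i) - lam (Suc (Suc i))) * (Msum lam (Suc i) - Msum mu (Suc i)))
     = (\<Sum>i<m. (int (mu (Suc i)) - int (lam (Suc (Suc i)))) * (int (Msum lam (Suc i)) - int (Msum mu (Suc i))))"
  proof -
    have "int ((mu (Suc i) - lam (Suc (Suc i))) * (Msum lam (Suc i) - Msum mu (Suc i)))
       = (int (mu (Suc i)) - int (lam (Suc (Suc i)))) * (int (Msum lam (Suc i)) - int (Msum mu (Suc i)))" for i
      using assms(2)[of i] Mle[of "Suc i"] by (simp only: of_nat_mult of_nat_diff)
    then show ?thesis by (simp only: of_nat_sum)
  qed
  have e2: "2 * (\<Sum>j<m. int (lam (Suc j) choose 2)) - 2 * (\<Sum>j<m. int (mu (Suc j) choose 2))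
       - 2 * int ((Msum lam m - Msum mu m) choose 2)
     = (\<Sum>j<m. int (lam (Suc j)) * (int (lam (Suc j)) - 1) - int (mu (Suc j)) * (int (mu (Suc j)) - 1))
          - (int (Msum lam m) - int (Msum mu m)) * (int (Msum lam m) - int (Msum mu m) - 1)"
    using Mle[of m] by (simp add: sum_distrib_left choose2_int sum_subtractf of_nat_diff)
  show ?thesis using exp_identity_gen[of mu lam m] assms(1) e1 e2 by simp
qed


(* ---- part 11 ---- *)


lemma JF_on_Suc: "JF_on U N (Suc i) = vec.dim (U \<inter> ker_pow N (Suc i)) - vec.dim (U \<inter> ker_pow N i)"
  by (simp add: JF_on_def)

lemma D_mono: "vec.dim (U \<inter> ker_pow (N::'k::field^'n^'n) i) \<le> vec.dim (U \<inter> ker_pow N (Suc i))"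
  by (intro vec.dim_subset) (use ker_pow_mono_Suc[of N i] in blast)

lemma Msum_JF: "Msum (JF_on U (N::'k::field^'n^'n)) i = vec.dim (U \<inter> ker_pow N i)"
proof (induction i)
  case 0 then show ?case using dimK0 by simp
next
  case (Suc i) then show ?case using D_mono[of U N i] by (simp add: JF_on_Suc)
qed

lemma cstep_factor:
  fixes Di D1 D2 u Mi mu1 lam1 lam2 a0 a1 x0 x1 :: nat
  assumes Q: "2 \<le> Q"
    and D: "Di \<le> D1" "D1 \<le> D2" "D2 \<le> u"
    and lam: "lam1 = D1 - Di" "lam2 = D2 - D1" "lam2 \<le> mu1" "mu1 \<le> lam1" "Mi \<le> Di"
    and a: "a0 + D1 = Di + u" "a1 + D2 = D1 + u"
    and x: "x0 = Mi + u - D1" "x1 = (Mi + mu1) + u - D2"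
  shows "cstep Q a1 a0 x0 (x1 - x0) =
     real Q ^ ((mu1 - lam2) * (D1 - (Mi + mu1))) * qbinom (1 / real Q) (lam1 - lam2) (lam1 - mu1)"
proof -
  have ba: "a0 \<le> a1" using D a lam by linarith
  have dd: "x1 - x0 = mu1 - lam2" using D lam x by linarith
  have xd: "x0 + (mu1 - lam2) = x1" using D lam x by linarith
  have aa: "a1 - a0 = lam1 - lam2" using D lam a by linarith
  have ax: "a1 - x1 = D1 - (Mi + mu1)" "x1 \<le> a1" using D lam a x by linarith+
  have sym: "qbinom (1 / real Q) (lam1 - lam2) (mu1 - lam2) = qbinom (1 / real Q) (lam1 - lam2) (lam1 - mu1)"
    using qbinom_sym[of "mu1 - lam2" "lam1 - lam2" "1 / real Q"] lam by (simp add: diff_diff_eq2)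
  have pw: "real Q ^ (a1 * (mu1 - lam2)) / real Q ^ (x1 * (mu1 - lam2)) = real Q ^ ((a1 - x1) * (mu1 - lam2))"
  proof -
    have "a1 * (mu1 - lam2) = x1 * (mu1 - lam2) + (a1 - x1) * (mu1 - lam2)"
      using ax(2) by (simp add: add_mult_distrib[symmetric])
    then show ?thesis using Q by (simp add: power_add)
  qed
  show ?thesis
    unfolding cstep_formula[OF Q ba] dd xd aa sym using pw ax(1) by (simp add: mult.commute)
qed

context
  fixes N :: "'k::{field,finite}^'n^'n" and U :: "('k^'n) set"
  assumes sU: "vec.subspace U" and NUU: "NV N U \<subseteq> U"
begin

lemma card_FamW_closed:
  assumes nil: "((*v) N ^^ m) = (\<lambda>x. 0)" and mu0: "mu 0 = 0" and mum: "\<And>j. m < j \<Longrightarrow> mu j = 0"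
    and i1: "\<And>i. JF_on U N (Suc (Suc i)) \<le> mu (Suc i)"
    and i2: "\<And>i. mu (Suc i) \<le> JF_on U N (Suc i)"
  shows "real (card (FamW N U mu)) =
    real CARD('k) ^ (\<Sum>i<m. (mu (Suc i) - JF_on U N (Suc (Suc i))) * (Msum (JF_on U N) (Suc i) - Msum mu (Suc i)))
    * (\<Prod>i<m. qbinom (1 / real CARD('k)) (JF_on U N (Suc i) - JF_on U N (Suc (Suc i))) (JF_on U N (Suc i) - mu (Suc i)))"
proof -
  let ?D = "\<lambda>i. vec.dim (U \<inter> ker_pow N i)"
  let ?lam = "JF_on U N"
  have Mle: "Msum mu s \<le> ?D s" for s
    using sum_mono[of "{1..s}" mu ?lam] i2 Msum_JF[of U N s] unfolding Msum_def
    by (metis Suc_pred atLeastAtMost_iff not_one_le_zero neq0_conv)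
  have inter: "?D (Suc (Suc i)) \<le> mu (Suc i) + ?D (Suc i)" for i
    using i1[of i] D_mono[of U N "Suc i"] by (simp add: JF_on_Suc)
  have "real (card (FamW N U mu)) = (\<Prod>i<m. cstep CARD('k) (vec.dim (Ach N U (Suc i))) (vec.dim (Ach N U i))
            (xseq N U mu i) (xseq N U mu (Suc i) - xseq N U mu i))"
    by (rule card_FamW[OF sU NUU nil mu0 mum inter])
  also have "\<dots> = (\<Prod>i<m. real CARD('k) ^ ((mu (Suc i) - ?lam (Suc (Suc i))) * (Msum ?lam (Suc i) - Msum mu (Suc i)))
      * qbinom (1 / real CARD('k)) (?lam (Suc i) - ?lam (Suc (Suc i))) (?lam (Suc i) - mu (Suc i)))"
  proof (rule prod.cong[OF refl])
    fix i
    have "cstep CARD('k) (vec.dim (Ach N U (Suc i))) (vec.dim (Ach N U i)) (xseq N U mu i) (xseq N U mu (Suc i) - xseq N U mu i)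
      = real CARD('k) ^ ((mu (Suc i) - ?lam (Suc (Suc i))) * (?D (Suc i) - (Msum mu i + mu (Suc i))))
      * qbinom (1 / real CARD('k)) (?lam (Suc i) - ?lam (Suc (Suc i))) (?lam (Suc i) - mu (Suc i))"
    proof (rule cstep_factor[OF card_ge2_field])
      show "?D i \<le> ?D (Suc i)" "?D (Suc i) \<le> ?D (Suc (Suc i))" by (rule D_mono)+
      show "?D (Suc (Suc i)) \<le> vec.dim U" by (rule DU_le[OF sU NUU])
      show "?lam (Suc i) = ?D (Suc i) - ?D i" "?lam (Suc (Suc i)) = ?D (Suc (Suc i)) - ?D (Suc i)"
        by (simp_all add: JF_on_Suc)
      show "?lam (Suc (Suc i)) \<le> mu (Suc i)" "mu (Suc i) \<le> ?lam (Suc i)" by (rule i1, rule i2)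
      show "Msum mu i \<le> ?D i" by (rule Mle)
      show "vec.dim (Ach N U i) + ?D (Suc i) = ?D i + vec.dim U" by (rule dim_Ach[OF sU NUU])
      show "vec.dim (Ach N U (Suc i)) + ?D (Suc (Suc i)) = ?D (Suc i) + vec.dim U" by (rule dim_Ach[OF sU NUU])
      show "xseq N U mu i = Msum mu i + vec.dim U - ?D (Suc i)" unfolding xseq_def by simp
      show "xseq N U mu (Suc i) = (Msum mu i + mu (Suc i)) + vec.dim U - ?D (Suc (Suc i))"
        unfolding xseq_def by simp
    qed
    then show "cstep CARD('k) (vec.dim (Ach N U (Suc i))) (vec.dim (Ach N U i)) (xseq N U mu i) (xseq N U mu (Suc i) - xseq N U mu i)
      = real CARD('k) ^ ((mu (Suc i) - ?lam (Suc (Suc i))) * (Msum ?lam (Suc i) - Msum mu (Suc i)))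
      * qbinom (1 / real CARD('k)) (?lam (Suc i) - ?lam (Suc (Suc i))) (?lam (Suc i) - mu (Suc i))"
      unfolding Msum_JF by (simp only: Msum_Suc)
  qed
  finally show ?thesis by (simp add: prod.distrib power_sum)
qed

end


(* ---- part 12 ---- *)


context
  fixes N :: "'k::{field,finite}^'n^'n" and U :: "('k^'n) set"
  assumes sU: "vec.subspace U" and NUU: "NV N U \<subseteq> U"
begin

lemma interlace:
  assumes W: "vec.subspace W" "NV N U \<subseteq> W" "W \<subseteq> U"
  shows "JF_on U N (Suc (Suc i)) \<le> JF_on W N (Suc i)" "JF_on W N (Suc i) \<le> JF_on U N (Suc i)"
proof -
  let ?D = "\<lambda>i. vec.dim (U \<inter> ker_pow N i)"
  let ?E = "\<lambda>i. vec.dim (W \<inter> ker_pow N i)"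
  let ?x = "\<lambda>i. vec.dim (W \<inter> Ach N U i)"
  let ?a = "\<lambda>i. vec.dim (Ach N U i)"
  have w0: "?x i + ?D (Suc i) = ?E i + vec.dim U" and w1: "?x (Suc i) + ?D (Suc (Suc i)) = ?E (Suc i) + vec.dim U"
    using W_Ach[OF sU NUU W] by blast+
  have a0: "?a i + ?D (Suc i) = ?D i + vec.dim U" and a1: "?a (Suc i) + ?D (Suc (Suc i)) = ?D (Suc i) + vec.dim U"
    using dim_Ach[OF sU NUU] by blast+
  have xm: "?x i \<le> ?x (Suc i)" by (intro vec.dim_subset) (use Ach_mono[OF sU NUU, of i] in blast)
  have sWA: "vec.subspace (W \<inter> Ach N U (Suc i))" using W(1) sAch[OF sU NUU] vec.subspace_inter by blast
  have sA: "vec.subspace (Ach N U i)" using sAch[OF sU NUU] .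
  have "{x + y |x y. x \<in> W \<inter> Ach N U (Suc i) \<and> y \<in> Ach N U i} \<subseteq> Ach N U (Suc i)"
    using Ach_mono[OF sU NUU, of i] sAch[OF sU NUU, of "Suc i"] vec.subspace_add by blast
  then have "vec.dim {x + y |x y. x \<in> W \<inter> Ach N U (Suc i) \<and> y \<in> Ach N U i} \<le> ?a (Suc i)"
    by (rule vec.dim_subset)
  moreover have "(W \<inter> Ach N U (Suc i)) \<inter> Ach N U i = W \<inter> Ach N U i"
    using Ach_mono[OF sU NUU, of i] by blast
  ultimately have xa: "?x (Suc i) + ?a i \<le> ?a (Suc i) + ?x i"
    using vec.dim_sums_Int[OF sWA sA] by simp
  have dm: "?D i \<le> ?D (Suc i)" "?D (Suc i) \<le> ?D (Suc (Suc i))" "?E i \<le> ?E (Suc i)" by (rule D_mono)+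
  show "JF_on U N (Suc (Suc i)) \<le> JF_on W N (Suc i)"
    unfolding JF_on_Suc using w0 w1 xm dm by linarith
  show "JF_on W N (Suc i) \<le> JF_on U N (Suc i)"
    unfolding JF_on_Suc using w0 w1 a0 a1 xa dm by linarith
qed

end

lemma JF_on_0[simp]: "JF_on W N 0 = 0" by (simp add: JF_on_def)

lemma JF_on_vanish:
  fixes N :: "'k::field^'n^'n"
  assumes nil: "((*v) N ^^ m) = (\<lambda>x. 0)" "m < j"
  shows "JF_on W N j = 0"
  using ker_pow_full[OF nil(1), of j] ker_pow_full[OF nil(1), of "j - 1"] nil(2)
  by (simp add: JF_on_def)


(* ---- part 13 ---- *)


definition shape_ok :: "(nat \<Rightarrow> nat) \<Rightarrow> nat \<Rightarrow> bool" where
  "shape_ok lam m \<longleftrightarrow> lam 0 = 0 \<and> (\<forall>i. lam (Suc (Suc i)) \<le> lam (Suc i)) \<and> (\<forall>i>m. lam i = 0)"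

lemma prefix_card:
  assumes "finite S" "\<And>c. c \<in> S \<Longrightarrow> 1 \<le> c" "\<And>c c'. c' \<in> S \<Longrightarrow> 1 \<le> c \<Longrightarrow> c \<le> c' \<Longrightarrow> c \<in> S"
  shows "S = {1..card S}"
proof (cases "S = {}")
  case True then show ?thesis by simp
next
  case False
  let ?M = "Max S"
  have e: "S = {1..?M}"
  proof
    show "S \<subseteq> {1..?M}" using assms(1,2) by auto
    show "{1..?M} \<subseteq> S" using assms(3)[of ?M] Max_in[OF assms(1) False] by auto
  qed
  have "card {1..?M} = ?M" by simp
  then show ?thesis using e by metis
qed

lemma nat_eq_by_le:
  assumes H: "\<And>c. 1 \<le> c \<Longrightarrow> c \<le> (a::nat) \<longleftrightarrow> c \<le> b" shows "a = b"
proof -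
  have "a \<le> b" using H[of a] by (cases "a = 0") auto
  moreover have "b \<le> a" using H[of b] by (cases "b = 0") auto
  ultimately show ?thesis by simp
qed

context
  fixes lam :: "nat \<Rightarrow> nat" and T :: "nat \<Rightarrow> nat \<Rightarrow> nat" and m :: nat
  assumes ss: "ssyt lam T" and sh: "shape_ok lam m"
begin

lemma nz_iff: "T i c \<noteq> 0 \<longleftrightarrow> 1 \<le> i \<and> 1 \<le> c \<and> c \<le> lam i"
  using ss unfolding ssyt_def in_shape_def by blast

lemma T_zero: "T 0 c = 0" "T i 0 = 0" using nz_iff by auto

lemma row_step: "1 \<le> i \<Longrightarrow> 1 \<le> c \<Longrightarrow> Suc c \<le> lam i \<Longrightarrow> T i c \<le> T i (Suc c)"
  using ss unfolding ssyt_def in_shape_def by auto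

lemma col_step: "1 \<le> c \<Longrightarrow> c \<le> lam (Suc i) \<Longrightarrow> T i c < T (Suc i) c"
  using ss unfolding ssyt_def in_shape_def by auto

lemma row_mono: "1 \<le> c \<Longrightarrow> c \<le> c' \<Longrightarrow> c' \<le> lam i \<Longrightarrow> T i c \<le> T i c'"
proof (induction c' rule: nat_induct)
  case 0 then show ?case by simp
next
  case (Suc n)
  show ?case
  proof (cases "c = Suc n")
    case True then show ?thesis by simp
  next
    case False
    then have "c \<le> n" using Suc by simp
    moreover have "1 \<le> i" using Suc.prems sh by (cases i) (auto simp: shape_ok_def)
    ultimately show ?thesis using Suc row_step[of i n] by fastforce
  qed
qed

lemma lam_le1: "1 \<le> i \<Longrightarrow> lam i \<le> lam 1"
proof (induction i rule: nat_induct)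
  case 0 then show ?case by simp
next
  case (Suc n)
  show ?case
  proof (cases n)
    case 0 then show ?thesis by simp
  next
    case (Suc n') then show ?thesis using Suc.IH sh[unfolded shape_ok_def] \<open>n = Suc n'\<close>
      by (metis One_nat_def Suc_le_mono le0 le_trans)
  qed
qed

lemma sub_set: "{c. 1 \<le> c \<and> 0 < T i c \<and> T i c \<le> j} = {1..subshape T j i}"
proof -
  let ?S = "{c. 1 \<le> c \<and> 0 < T i c \<and> T i c \<le> j}"
  have "?S \<subseteq> {1..lam i}" using nz_iff by auto
  then have fin: "finite ?S" using finite_subset by blast
  have "?S = {1..card ?S}"
  proof (rule prefix_card[OF fin])
    fix c c' assume c': "c' \<in> ?S" and c: "1 \<le> c" "c \<le> c'"
    have "T i c' \<noteq> 0" using c' by simp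
    then have h: "1 \<le> i" "c' \<le> lam i" using nz_iff[of i c'] by blast+
    have "T i c \<noteq> 0" using nz_iff[of i c] h c by linarith
    moreover have "T i c \<le> T i c'" by (rule row_mono[OF c(1) c(2) h(2)])
    ultimately show "c \<in> ?S" using c c' by auto
  qed auto
  then show ?thesis by (simp add: subshape_def)
qed

lemma in_sub: "1 \<le> c \<Longrightarrow> c \<le> subshape T j i \<longleftrightarrow> 0 < T i c \<and> T i c \<le> j"
  using sub_set[of i j] by (metis (no_types, lifting) atLeastAtMost_iff mem_Collect_eq)

lemma subshape_0: "subshape T 0 = (\<lambda>i. 0)"
proof (rule ext)
  fix i have "{c. 1 \<le> c \<and> 0 < T i c \<and> T i c \<le> 0} = {}" by auto
  then show "subshape T 0 i = 0" unfolding subshape_def by (metis card.empty)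
qed

lemma subshape_row0: "subshape T j 0 = 0"
  using T_zero by (simp add: subshape_def)

lemma subshape_le_lam: "subshape T j i \<le> lam i"
proof -
  have "c \<le> lam i" if "1 \<le> c" "c \<le> subshape T j i" for c
    using that in_sub[of c j i] nz_iff[of i c] by linarith
  then show ?thesis by (cases "subshape T j i = 0") auto
qed

lemma subshape_full:
  assumes "\<And>i c. T i c \<le> k"
  shows "subshape T k i = lam i"
proof (cases "i = 0")
  case True then show ?thesis using sh subshape_row0 by (simp add: shape_ok_def)
next
  case False
  show ?thesis
  proof (rule nat_eq_by_le)
    fix c assume "1 \<le> (c::nat)"
    then show "c \<le> subshape T k i \<longleftrightarrow> c \<le> lam i" using in_sub assms nz_iff False by auto
  qed
qed

lemma finite_level: "finite {(i, j). 1 \<le> i \<and> 1 \<le> j \<and> T i j = v \<and> v \<noteq> 0}"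
proof -
  have "{(i, j). 1 \<le> i \<and> 1 \<le> j \<and> T i j = v \<and> v \<noteq> 0} \<subseteq> {1..m} \<times> {1..lam 1}"
  proof
    fix p assume "p \<in> {(i, j). 1 \<le> i \<and> 1 \<le> j \<and> T i j = v \<and> v \<noteq> 0}"
    then obtain i j where h: "p = (i, j)" "1 \<le> i" "1 \<le> j" "T i j \<noteq> 0" by auto
    then have jl: "j \<le> lam i" using nz_iff[of i j] by blast
    have "i \<le> m"
    proof (rule ccontr)
      assume "\<not> i \<le> m" then have "lam i = 0" using sh by (simp add: shape_ok_def)
      then show False using jl h(3) by simp
    qed
    then show "p \<in> {1..m} \<times> {1..lam 1}" using lam_le1[OF h(2)] jl h by simp
  qed
  then show ?thesis using finite_subset by blast
qed

lemma entries_le: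
  assumes hc: "has_content T alpha"
  shows "T i c \<le> length alpha"
proof (rule ccontr)
  assume "\<not> T i c \<le> length alpha"
  then have v: "length alpha < T i c" "1 \<le> T i c" by auto
  have "T i c \<noteq> 0" using v by simp
  then have ic: "1 \<le> i" "1 \<le> c" using nz_iff[of i c] by blast+
  let ?S = "{(i', j). 1 \<le> i' \<and> 1 \<le> j \<and> T i' j = T i c}"
  have "?S = {(i', j). 1 \<le> i' \<and> 1 \<le> j \<and> T i' j = T i c \<and> T i c \<noteq> 0}" using v by auto
  then have fin: "finite ?S" using finite_level by simp
  have mem: "(i, c) \<in> ?S" using ic by simp
  have "card ?S \<noteq> 0" using card_0_eq[OF fin] mem by blast
  moreover have "card ?S = (if T i c \<le> length alpha then alpha ! (T i c - 1) else 0)"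
    using hc[unfolded has_content_def, rule_format, OF v(2)] by simp
  then have "card ?S = 0" using v(1) by simp
  ultimately show False by simp
qed

end


(* ---- part 14 ---- *)


definition restr :: "(nat \<Rightarrow> nat \<Rightarrow> nat) \<Rightarrow> nat \<Rightarrow> nat \<Rightarrow> nat \<Rightarrow> nat" where
  "restr T k i c = (if T i c \<le> k then T i c else 0)"

definition wfac :: "real \<Rightarrow> (nat \<Rightarrow> nat \<Rightarrow> nat) \<Rightarrow> nat \<times> nat \<Rightarrow> real" where
  "wfac q T = (\<lambda>(i,j). if 1 \<le> i \<and> 1 \<le> j then
       qbinom q (subshape T j i - subshape T j (i+1)) (subshape T j i - subshape T (j-1) i)
     else 1)"

lemma wt_q_wfac: "wt_q q T = Prod_any (wfac q T)"
  by (simp add: wt_q_def wfac_def)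

lemma subshape_restr_le: "j \<le> k \<Longrightarrow> subshape (restr T k) j = subshape T j"
proof (rule ext)
  fix i assume "j \<le> k"
  then have "{c. 1 \<le> c \<and> 0 < restr T k i c \<and> restr T k i c \<le> j} = {c. 1 \<le> c \<and> 0 < T i c \<and> T i c \<le> j}"
    by (auto simp: restr_def)
  then show "subshape (restr T k) j i = subshape T j i" by (simp add: subshape_def)
qed

lemma subshape_restr_ge: "k \<le> j \<Longrightarrow> subshape (restr T k) j = subshape T k"
proof (rule ext)
  fix i assume "k \<le> j"
  then have "{c. 1 \<le> c \<and> 0 < restr T k i c \<and> restr T k i c \<le> j} = {c. 1 \<le> c \<and> 0 < T i c \<and> T i c \<le> k}"
    by (auto simp: restr_def)
  then show "subshape (restr T k) j i = subshape T k i" by (simp add: subshape_def)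
qed

lemma wfac_one: "subshape T j i = subshape T (j - 1) i \<Longrightarrow> 0 < q \<Longrightarrow> wfac q T (i, j) = 1"
  by (simp add: wfac_def qbinom_0)

lemma wt_support:
  assumes ss: "ssyt lam T" and sh: "shape_ok lam m" and le: "\<And>i c. T i c \<le> k" and q: "0 < q"
  shows "{p. wfac q T p \<noteq> 1} \<subseteq> {1..m} \<times> {1..k}"
proof
  fix p assume p: "p \<in> {p. wfac q T p \<noteq> 1}"
  obtain i j where ij: "p = (i, j)" by (cases p)
  have ij1: "1 \<le> i" "1 \<le> j" using p ij by (auto simp: wfac_def split: if_splits)
  have "i \<le> m"
  proof (rule ccontr)
    assume "\<not> i \<le> m"
    then have "lam i = 0" "lam (Suc i) = 0" using sh by (auto simp: shape_ok_def)
    then have "subshape T j i = 0" "subshape T j (i+1) = 0" "subshape T (j-1) i = 0"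
      using subshape_le_lam[OF ss sh, of j i] subshape_le_lam[OF ss sh, of j "Suc i"]
        subshape_le_lam[OF ss sh, of "j-1" i] by simp_all
    then have "wfac q T (i, j) = 1" using q by (intro wfac_one) simp_all
    then show False using p ij by simp
  qed
  moreover have "j \<le> k"
  proof (rule ccontr)
    assume "\<not> j \<le> k"
    then have kj: "k \<le> j - 1" by simp
    have "T i c \<le> j" "T i c \<le> j - 1" for i c using le[of i c] kj by linarith+
    then have "subshape T j = lam" "subshape T (j - 1) = lam"
      using subshape_full[OF ss sh] by (auto intro!: ext)
    then have "wfac q T (i, j) = 1" using q by (intro wfac_one) simp_all
    then show False using p ij by simp
  qed
  ultimately show "p \<in> {1..m} \<times> {1..k}" using ij ij1 by simp
qed

lemma wt_as_prod:
  assumes ss: "ssyt lam T" and sh: "shape_ok lam m" and le: "\<And>i c. T i c \<le> k" and q: "0 < q"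
  shows "wt_q q T = (\<Prod>i\<in>{1..m}. \<Prod>j\<in>{1..k}. wfac q T (i, j))"
proof -
  have "Prod_any (wfac q T) = prod (wfac q T) ({1..m} \<times> {1..k})"
    by (rule Prod_any.expand_superset[OF _ wt_support[OF assms]]) simp
  then show ?thesis by (simp add: wt_q_wfac prod.cartesian_product)
qed

context
  fixes lam :: "nat \<Rightarrow> nat" and T :: "nat \<Rightarrow> nat \<Rightarrow> nat" and m k :: nat and alpha :: "nat list"
  assumes ss: "ssyt lam T" and sh: "shape_ok lam m" and hc: "has_content T alpha"
    and len: "length alpha = Suc k"
begin

abbreviation "muT \<equiv> subshape T k"

lemma T_le: "T i c \<le> Suc k" using entries_le[OF ss sh hc] len by simp

lemma restr_nz: "restr T k i c \<noteq> 0 \<longleftrightarrow> in_shape muT i c"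
proof (cases "1 \<le> i \<and> 1 \<le> c")
  case True
  then show ?thesis using in_sub[OF ss sh, of c k i] by (auto simp: restr_def in_shape_def)
next
  case False
  then have "T i c = 0" using nz_iff[OF ss sh, of i c] by auto
  then show ?thesis using False by (auto simp: restr_def in_shape_def)
qed

lemma mu_le: "muT i \<le> lam i" by (rule subshape_le_lam[OF ss sh])

lemma restr_eq: "1 \<le> c \<Longrightarrow> c \<le> muT i \<Longrightarrow> restr T k i c = T i c"
  using in_sub[OF ss sh, of c k i] by (simp add: restr_def)

lemma ssyt_restr: "ssyt muT (restr T k)"
  unfolding ssyt_def
proof (intro conjI allI impI)
  fix i c show "in_shape muT i c \<longleftrightarrow> restr T k i c \<noteq> 0" using restr_nz by simp
next
  fix i c assume a: "in_shape muT i (c + 1)"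
  then have c1: "1 \<le> i" "c + 1 \<le> muT i" by (auto simp: in_shape_def)
  show "restr T k i c \<le> restr T k i (c + 1)"
  proof (cases "c = 0")
    case True then show ?thesis by (simp add: restr_def T_zero[OF ss sh])
  next
    case False
    then have "restr T k i c = T i c" "restr T k i (c+1) = T i (c+1)" using restr_eq c1 by auto
    moreover have "T i c \<le> T i (Suc c)" using row_step[OF ss sh, of i c] c1 False mu_le[of i] by simp
    ultimately show ?thesis by simp
  qed
next
  fix i c assume a: "in_shape muT (i + 1) c"
  then have c1: "1 \<le> c" "c \<le> muT (Suc i)" by (auto simp: in_shape_def)
  have r1: "restr T k (Suc i) c = T (Suc i) c" using restr_eq c1 by simp
  have "0 < T (Suc i) c \<and> T (Suc i) c \<le> k" using in_sub[OF ss sh, of c k "Suc i"] c1 by simp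
  moreover have "T i c < T (Suc i) c" using col_step[OF ss sh, of c i] c1 mu_le[of "Suc i"] by simp
  ultimately show "restr T k i c < restr T k (i + 1) c" using r1 by (simp add: restr_def)
qed

lemma shape_mu: "shape_ok muT m"
  unfolding shape_ok_def
proof (intro conjI allI impI)
  show "muT 0 = 0" by (rule subshape_row0[OF ss sh])
next
  fix i :: nat assume "m < i" then show "muT i = 0" using mu_le[of i] sh by (simp add: shape_ok_def)
next
  fix i
  have "c \<le> muT (Suc i)" if c: "1 \<le> c" "c \<le> muT (Suc (Suc i))" for c
  proof -
    have t2: "0 < T (Suc (Suc i)) c" "T (Suc (Suc i)) c \<le> k" using in_sub[OF ss sh, of c k] c by auto
    have "c \<le> lam (Suc (Suc i))" using mu_le c(2) le_trans by blast
    then have cl: "c \<le> lam (Suc i)" using sh by (metis shape_ok_def le_trans)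
    have "T (Suc i) c < T (Suc (Suc i)) c" using col_step[OF ss sh, of c "Suc i"] c \<open>c \<le> lam (Suc (Suc i))\<close> by simp
    moreover have "T (Suc i) c \<noteq> 0" using nz_iff[OF ss sh, of "Suc i" c] c cl by simp
    ultimately show ?thesis using in_sub[OF ss sh, of c k "Suc i"] c t2 by simp
  qed
  then show "muT (Suc (Suc i)) \<le> muT (Suc i)" by (cases "muT (Suc (Suc i)) = 0") auto
qed

lemma inter1: "lam (Suc (Suc i)) \<le> muT (Suc i)"
proof -
  have "c \<le> muT (Suc i)" if c: "1 \<le> c" "c \<le> lam (Suc (Suc i))" for c
  proof -
    have cl: "c \<le> lam (Suc i)" using sh c by (metis shape_ok_def le_trans)
    have "T (Suc i) c < T (Suc (Suc i)) c" using col_step[OF ss sh, of c "Suc i"] c by simp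
    moreover have "T (Suc (Suc i)) c \<le> Suc k" by (rule T_le)
    moreover have "T (Suc i) c \<noteq> 0" using nz_iff[OF ss sh, of "Suc i" c] c cl by simp
    ultimately show ?thesis using in_sub[OF ss sh, of c k "Suc i"] c by simp
  qed
  then show ?thesis by (cases "lam (Suc (Suc i)) = 0") auto
qed

lemma content_restr: "has_content (restr T k) (butlast alpha)"
  unfolding has_content_def
proof (intro allI impI)
  fix v :: nat assume v: "1 \<le> v"
  show "card {(i, j). 1 \<le> i \<and> 1 \<le> j \<and> restr T k i j = v} =
        (if v \<le> length (butlast alpha) then butlast alpha ! (v - 1) else 0)"
  proof (cases "v \<le> k")
    case True
    then have "{(i, j). 1 \<le> i \<and> 1 \<le> j \<and> restr T k i j = v} = {(i, j). 1 \<le> i \<and> 1 \<le> j \<and> T i j = v}"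
      using v by (auto simp: restr_def)
    moreover have "butlast alpha ! (v - 1) = alpha ! (v - 1)" using True v len by (simp add: nth_butlast)
    ultimately show ?thesis using hc[unfolded has_content_def, rule_format, OF v] True len by simp
  next
    case False
    then have "{(i, j). 1 \<le> i \<and> 1 \<le> j \<and> restr T k i j = v} = {}"
      using v by (auto simp: restr_def)
    then have "card {(i, j). 1 \<le> i \<and> 1 \<le> j \<and> restr T k i j = v} = 0" by (metis card.empty)
    then show ?thesis using False len by simp
  qed
qed

lemma restr_le: "restr T k i c \<le> k" by (simp add: restr_def)

lemma wt_decomp:
  assumes q: "0 < q"
  shows "wt_q q T = wt_q q (restr T k) * (\<Prod>i\<in>{1..m}. qbinom q (lam i - lam (i+1)) (lam i - muT i))"
proof -
  have "wt_q q T = (\<Prod>i\<in>{1..m}. \<Prod>j\<in>{1..Suc k}. wfac q T (i, j))"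
    by (rule wt_as_prod[OF ss sh T_le q])
  also have "\<dots> = (\<Prod>i\<in>{1..m}. (\<Prod>j\<in>{1..k}. wfac q (restr T k) (i, j)) * qbinom q (lam i - lam (i+1)) (lam i - muT i))"
  proof (rule prod.cong[OF refl])
    fix i assume i: "i \<in> {1..m}"
    have "(\<Prod>j\<in>{1..Suc k}. wfac q T (i, j)) = (\<Prod>j\<in>{1..k}. wfac q T (i, j)) * wfac q T (i, Suc k)"
      by (simp add: prod.cl_ivl_Suc)
    moreover have "wfac q T (i, j) = wfac q (restr T k) (i, j)" if "j \<in> {1..k}" for j
    proof -
      have e1: "subshape (restr T k) j = subshape T j" using that by (intro subshape_restr_le) simp
      have "j - 1 \<le> k" using that by auto
      then have e2: "subshape (restr T k) (j-1) = subshape T (j-1)" by (rule subshape_restr_le)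
      show ?thesis unfolding wfac_def prod.case e1 e2 by (rule refl)
    qed
    moreover have "subshape T (Suc k) = lam" using subshape_full[OF ss sh T_le] by (intro ext) simp
    ultimately show "(\<Prod>j\<in>{1..Suc k}. wfac q T (i, j)) =
       (\<Prod>j\<in>{1..k}. wfac q (restr T k) (i, j)) * qbinom q (lam i - lam (i+1)) (lam i - muT i)"
      using i by (simp add: wfac_def)
  qed
  also have "\<dots> = (\<Prod>i\<in>{1..m}. \<Prod>j\<in>{1..k}. wfac q (restr T k) (i, j)) * (\<Prod>i\<in>{1..m}. qbinom q (lam i - lam (i+1)) (lam i - muT i))"
    by (simp add: prod.distrib)
  also have "(\<Prod>i\<in>{1..m}. \<Prod>j\<in>{1..k}. wfac q (restr T k) (i, j)) = wt_q q (restr T k)"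
    by (rule wt_as_prod[OF ssyt_restr shape_mu restr_le q, symmetric])
  finally show ?thesis .
qed

end


(* ---- part 15 ---- *)


definition extT :: "(nat \<Rightarrow> nat \<Rightarrow> nat) \<Rightarrow> (nat \<Rightarrow> nat) \<Rightarrow> (nat \<Rightarrow> nat) \<Rightarrow> nat \<Rightarrow> nat \<Rightarrow> nat \<Rightarrow> nat" where
  "extT T' mu lam k i c = (if c \<le> mu i then T' i c else if c \<le> lam i then Suc k else 0)"

lemma card_strip:
  fixes mu lam :: "nat \<Rightarrow> nat" and m :: nat
  assumes le: "\<And>i. mu i \<le> lam i" and van: "\<And>i. m < i \<Longrightarrow> lam i = 0"
  shows "card {(i, c). 1 \<le> i \<and> 1 \<le> c \<and> mu i < c \<and> c \<le> lam i} = (\<Sum>i\<in>{1..m}. lam i - mu i)"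
proof -
  have "{(i, c). 1 \<le> i \<and> 1 \<le> c \<and> mu i < c \<and> c \<le> lam i} = (\<Union>i\<in>{1..m}. {i} \<times> {Suc (mu i)..lam i})"
  proof (rule set_eqI)
    fix p :: "nat \<times> nat"
    obtain i c where p: "p = (i, c)" by (cases p)
    have "i \<le> m" if "1 \<le> c" "c \<le> lam i"
    proof (rule ccontr)
      assume "\<not> i \<le> m" then have "lam i = 0" using van by simp
      then show False using that by simp
    qed
    then show "p \<in> {(i, c). 1 \<le> i \<and> 1 \<le> c \<and> mu i < c \<and> c \<le> lam i} \<longleftrightarrow>
               p \<in> (\<Union>i\<in>{1..m}. {i} \<times> {Suc (mu i)..lam i})"
      using p by auto
  qed
  moreover have "card (\<Union>i\<in>{1..m}. {i} \<times> {Suc (mu i)..lam i}) = (\<Sum>i\<in>{1..m}. card ({i} \<times> {Suc (mu i)..lam i}))"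
    by (rule card_UN_disjoint) auto
  ultimately show ?thesis by (simp add: card_cartesian_product)
qed

context
  fixes lam mu :: "nat \<Rightarrow> nat" and T' :: "nat \<Rightarrow> nat \<Rightarrow> nat" and m k :: nat and alpha' :: "nat list"
  assumes ss': "ssyt mu T'" and shm: "shape_ok mu m" and hc': "has_content T' alpha'"
    and len': "length alpha' = k" and shl: "shape_ok lam m"
    and i1: "\<And>i. mu (Suc i) \<le> lam (Suc i)" and i2: "\<And>i. lam (Suc (Suc i)) \<le> mu (Suc i)"
begin

abbreviation "TT \<equiv> extT T' mu lam k"

lemma T'_le: "T' i c \<le> k" using entries_le[OF ss' shm hc'] len' by simp

lemma mu_le_lam: "mu i \<le> lam i"
  using i1 shm by (cases i) (auto simp: shape_ok_def)

lemma T'_nz: "T' i c \<noteq> 0 \<longleftrightarrow> 1 \<le> i \<and> 1 \<le> c \<and> c \<le> mu i" by (rule nz_iff[OF ss' shm])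

lemma ext_nz: "in_shape lam i c \<longleftrightarrow> TT i c \<noteq> 0"
proof (cases "c \<le> mu i")
  case True
  then show ?thesis using T'_nz[of i c] mu_le_lam[of i] by (auto simp: extT_def in_shape_def)
next
  case False
  then have "1 \<le> c" by simp
  moreover have "c \<le> lam i \<Longrightarrow> 1 \<le> i" using False shl by (cases i) (auto simp: shape_ok_def)
  ultimately show ?thesis using False by (auto simp: extT_def in_shape_def)
qed

lemma ssyt_ext: "ssyt lam TT"
  unfolding ssyt_def
proof (intro conjI allI impI)
  fix i c
  show "in_shape lam i c \<longleftrightarrow> TT i c \<noteq> 0" by (rule ext_nz)
next
  fix i c assume a: "in_shape lam i (c + 1)"
  show "TT i c \<le> TT i (c + 1)"
  proof (cases "c + 1 \<le> mu i")
    case True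
    then show ?thesis using ss' unfolding ssyt_def in_shape_def
      using a by (auto simp: extT_def in_shape_def)
  next
    case False
    then show ?thesis using a T'_le[of i c] by (auto simp: extT_def in_shape_def)
  qed
next
  fix i c assume a: "in_shape lam (i + 1) c"
  show "TT i c < TT (i + 1) c"
  proof (cases i)
    case 0
    then have "TT i c = 0" using shl T'_nz[of 0 c] by (auto simp: extT_def shape_ok_def)
    moreover have "TT (i + 1) c \<noteq> 0" using ext_nz a by blast
    ultimately show ?thesis by simp
  next
    case (Suc i')
    have c: "1 \<le> c" "c \<le> lam (Suc (Suc i'))" using a Suc by (auto simp: in_shape_def)
    then have cm: "c \<le> mu (Suc i')" using i2[of i'] by simp
    then have t1: "TT i c = T' i c" using Suc by (simp add: extT_def)
    show ?thesis
    proof (cases "c \<le> mu (Suc i)")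
      case True
      then show ?thesis using t1 ss' c unfolding ssyt_def in_shape_def by (auto simp: extT_def)
    next
      case False
      then show ?thesis using t1 T'_le[of i c] c Suc by (auto simp: extT_def)
    qed
  qed
qed


lemma restr_ext: "restr TT k = T'"
proof (intro ext)
  fix i c show "restr TT k i c = T' i c"
  proof (cases "c \<le> mu i")
    case True then show ?thesis using T'_le[of i c] by (simp add: restr_def extT_def)
  next
    case False
    then have "T' i c = 0" using T'_nz[of i c] by auto
    then show ?thesis using False by (simp add: restr_def extT_def)
  qed
qed

lemma TT_le: "TT i c \<le> Suc k" using T'_le[of i c] by (simp add: extT_def)

lemma subshape_ext_top: "subshape TT (Suc k) = lam"
  by (intro ext subshape_full[OF ssyt_ext shl TT_le])

lemma content_ext:
  assumes a: "a = (\<Sum>i\<in>{1..m}. lam i - mu i)"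
  shows "has_content TT (alpha' @ [a])"
  unfolding has_content_def
proof (intro allI impI)
  fix v :: nat assume v: "1 \<le> v"
  show "card {(i, j). 1 \<le> i \<and> 1 \<le> j \<and> TT i j = v} =
        (if v \<le> length (alpha' @ [a]) then (alpha' @ [a]) ! (v - 1) else 0)"
  proof (cases "v \<le> k")
    case True
    have "{(i, j). 1 \<le> i \<and> 1 \<le> j \<and> TT i j = v} = {(i, j). 1 \<le> i \<and> 1 \<le> j \<and> T' i j = v}"
    proof (rule set_eqI)
      fix p :: "nat \<times> nat"
      obtain i j where p: "p = (i, j)" by (cases p)
      have "TT i j = v \<longleftrightarrow> T' i j = v"
      proof (cases "j \<le> mu i")
        case True then show ?thesis by (simp add: extT_def)
      next
        case False
        then have "T' i j = 0" using T'_nz[of i j] by auto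
        then show ?thesis using False v \<open>v \<le> k\<close> by (simp add: extT_def)
      qed
      then show "p \<in> {(i, j). 1 \<le> i \<and> 1 \<le> j \<and> TT i j = v} \<longleftrightarrow> p \<in> {(i, j). 1 \<le> i \<and> 1 \<le> j \<and> T' i j = v}"
        using p by simp
    qed
    moreover have "v - 1 < length alpha'" using True v len' by simp
    then have "(alpha' @ [a]) ! (v - 1) = alpha' ! (v - 1)" by (simp add: nth_append)
    ultimately show ?thesis using hc'[unfolded has_content_def, rule_format, OF v] True len' by simp
  next
    case False
    show ?thesis
    proof (cases "v = Suc k")
      case True
      have "{(i, j). 1 \<le> i \<and> 1 \<le> j \<and> TT i j = v} = {(i, c). 1 \<le> i \<and> 1 \<le> c \<and> mu i < c \<and> c \<le> lam i}"
      proof (rule set_eqI)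
        fix p :: "nat \<times> nat"
        obtain i j where p: "p = (i, j)" by (cases p)
        have "TT i j = v \<longleftrightarrow> mu i < j \<and> j \<le> lam i"
          using T'_le[of i j] True by (auto simp: extT_def)
        then show "p \<in> {(i, j). 1 \<le> i \<and> 1 \<le> j \<and> TT i j = v} \<longleftrightarrow> p \<in> {(i, c). 1 \<le> i \<and> 1 \<le> c \<and> mu i < c \<and> c \<le> lam i}"
          using p by auto
      qed
      moreover have "card {(i, c). 1 \<le> i \<and> 1 \<le> c \<and> mu i < c \<and> c \<le> lam i} = a"
        unfolding a using mu_le_lam shl by (intro card_strip) (auto simp: shape_ok_def)
      moreover have "(alpha' @ [a]) ! k = a" using len' by (metis nth_append_length)
      ultimately show ?thesis using True len' by simp
    next
      case False
      then have "{(i, j). 1 \<le> i \<and> 1 \<le> j \<and> TT i j = v} = {}"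
        using TT_le \<open>\<not> v \<le> k\<close> by (auto simp: le_Suc_eq)
      then have "card {(i, j). 1 \<le> i \<and> 1 \<le> j \<and> TT i j = v} = 0" by (metis card.empty)
      then show ?thesis using False \<open>\<not> v \<le> k\<close> len' by simp
    qed
  qed
qed

end


(* ---- part 16 ---- *)


lemma ssyt_unique:
  assumes s1: "ssyt lam T1" and s2: "ssyt lam T2" and sh: "shape_ok lam m"
    and l1: "\<And>i c. T1 i c \<le> k" and l2: "\<And>i c. T2 i c \<le> k"
    and eq: "\<And>j. j \<le> k \<Longrightarrow> subshape T1 j = subshape T2 j"
  shows "T1 = T2"
proof (intro ext)
  fix i c
  show "T1 i c = T2 i c"
  proof (cases "1 \<le> c")
    case False
    then have "c = 0" by simp
    then show ?thesis using T_zero[OF s1 sh] T_zero[OF s2 sh] by simp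
  next
    case True
    have z: "T1 i c \<noteq> 0 \<longleftrightarrow> T2 i c \<noteq> 0"
      using in_sub[OF s1 sh True, of k i] in_sub[OF s2 sh True, of k i] eq[of k] l1[of i c] l2[of i c] by auto
    show ?thesis
    proof (cases "T1 i c = 0")
      case True then show ?thesis using z by simp
    next
      case False
      then have nz: "T1 i c \<noteq> 0" "T2 i c \<noteq> 0" using z by auto
      have "T1 i c \<le> T2 i c"
        using in_sub[OF s1 sh \<open>1 \<le> c\<close>, of "T2 i c" i] in_sub[OF s2 sh \<open>1 \<le> c\<close>, of "T2 i c" i]
          eq[OF l2[of i c]] nz by auto
      moreover have "T2 i c \<le> T1 i c"
        using in_sub[OF s1 sh \<open>1 \<le> c\<close>, of "T1 i c" i] in_sub[OF s2 sh \<open>1 \<le> c\<close>, of "T1 i c" i]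
          eq[OF l1[of i c]] nz by auto
      ultimately show ?thesis by simp
    qed
  qed
qed

lemma finite_ssyt:
  assumes sh: "shape_ok lam m"
  shows "finite {T. ssyt_content lam alpha T}"
proof -
  let ?R = "{1..m} \<times> {1..lam 1}"
  let ?k = "length alpha"
  let ?F = "{f :: nat \<times> nat \<Rightarrow> nat. \<forall>x. (x \<in> ?R \<longrightarrow> f x \<in> {0..?k}) \<and> (x \<notin> ?R \<longrightarrow> f x = 0)}"
  have fin: "finite ?F" by (rule finite_set_of_finite_funs) auto
  have "{T. ssyt_content lam alpha T} \<subseteq> curry ` ?F"
  proof
    fix T assume "T \<in> {T. ssyt_content lam alpha T}"
    then have ss: "ssyt lam T" and hc: "has_content T alpha" by (auto simp: ssyt_content_def)
    have "case_prod T \<in> ?F"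
    proof (intro CollectI allI conjI impI)
      fix x :: "nat \<times> nat"
      obtain i c where x: "x = (i, c)" by (cases x)
      show "case_prod T x \<in> {0..?k}" using entries_le[OF ss sh hc, of i c] x by simp
      assume "x \<notin> ?R"
      show "case_prod T x = 0"
      proof (rule ccontr)
        assume "case_prod T x \<noteq> 0"
        then have "T i c \<noteq> 0" using x by simp
        then have h: "1 \<le> i" "1 \<le> c" "c \<le> lam i" using nz_iff[OF ss sh, of i c] by blast+
        have "i \<le> m"
        proof (rule ccontr)
          assume "\<not> i \<le> m" then have "lam i = 0" using sh by (simp add: shape_ok_def)
          then show False using h by simp
        qed
        then show False using \<open>x \<notin> ?R\<close> x h lam_le1[OF ss sh h(1)] by simp
      qed
    qed
    moreover have "T = curry (case_prod T)" by simp
    ultimately show "T \<in> curry ` ?F" by blast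
  qed
  then show ?thesis using finite_subset fin by blast
qed

lemma shape_sum:
  assumes ss: "ssyt lam T" and sh: "shape_ok lam m" and hc: "has_content T alpha"
  shows "Msum lam m = sum_list alpha"
proof -
  let ?S = "{(i, c). 1 \<le> i \<and> 1 \<le> c \<and> T i c \<noteq> 0}"
  have "?S = {(i, c). 1 \<le> i \<and> 1 \<le> c \<and> (\<lambda>_. 0::nat) i < c \<and> c \<le> lam i}"
    using nz_iff[OF ss sh] by auto
  then have c1: "card ?S = (\<Sum>i\<in>{1..m}. lam i - 0)"
    using card_strip[of "\<lambda>_. 0" lam m] sh by (simp add: shape_ok_def)
  have "?S = (\<Union>v\<in>{1..length alpha}. {(i, c). 1 \<le> i \<and> 1 \<le> c \<and> T i c = v})"
    using entries_le[OF ss sh hc] by (auto simp: Suc_le_eq)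
  moreover have "card (\<Union>v\<in>{1..length alpha}. {(i, c). 1 \<le> i \<and> 1 \<le> c \<and> T i c = v})
      = (\<Sum>v\<in>{1..length alpha}. card {(i, c). 1 \<le> i \<and> 1 \<le> c \<and> T i c = v})"
  proof (rule card_UN_disjoint)
    show "\<forall>v\<in>{1..length alpha}. finite {(i, c). 1 \<le> i \<and> 1 \<le> c \<and> T i c = v}"
    proof
      fix v assume "v \<in> {1..length alpha}"
      then have "{(i, c). 1 \<le> i \<and> 1 \<le> c \<and> T i c = v} = {(i, c). 1 \<le> i \<and> 1 \<le> c \<and> T i c = v \<and> v \<noteq> 0}"
        by auto
      then show "finite {(i, c). 1 \<le> i \<and> 1 \<le> c \<and> T i c = v}" using finite_level[OF ss sh, of v] by simp
    qed
  qed auto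
  moreover have "(\<Sum>v\<in>{1..length alpha}. card {(i, c). 1 \<le> i \<and> 1 \<le> c \<and> T i c = v}) = (\<Sum>v\<in>{1..length alpha}. alpha ! (v - 1))"
    using hc unfolding has_content_def by (intro sum.cong) auto
  moreover have "(\<Sum>v\<in>{1..length alpha}. alpha ! (v - 1)) = sum_list alpha"
    by (simp add: sum_list_sum_nth sum.atLeast1_atMost_eq atLeast0LessThan)
  ultimately have "card ?S = sum_list alpha" by simp
  then show ?thesis using c1 by (simp add: Msum_def)
qed


(* ---- part 17 ---- *)


definition FlU :: "('k::field^'n) set \<Rightarrow> nat list \<Rightarrow> (('k^'n) set) list set" where
  "FlU U alpha = {F. length F = length alpha + 1
     \<and> (\<forall>i\<le>length alpha. vec.subspace (F ! i) \<and> vec.dim (F ! i) = sum_list (take i alpha))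
     \<and> (\<forall>i<length alpha. F ! i \<subseteq> F ! (i+1))
     \<and> F ! 0 = {0} \<and> F ! length alpha = U}"

lemma Fl_FlU: "Fl alpha = FlU UNIV alpha" by (simp add: Fl_def FlU_def)

definition flagsT :: "'k::field^'n^'n \<Rightarrow> ('k^'n) set \<Rightarrow> nat list \<Rightarrow> (nat \<Rightarrow> nat \<Rightarrow> nat) \<Rightarrow> (('k^'n) set) list set" where
  "flagsT N U alpha T = {F \<in> FlU U alpha. strictly_compatible N F \<and> JF_flag_is N F T}"

definition flagsA :: "'k::field^'n^'n \<Rightarrow> ('k^'n) set \<Rightarrow> nat list \<Rightarrow> (('k^'n) set) list set" where
  "flagsA N U alpha = {F \<in> FlU U alpha. strictly_compatible N F}"

lemma finite_FlU: "finite (FlU (U::('k::{field,finite}^'n) set) alpha)"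
proof -
  have "FlU U alpha \<subseteq> {xs. set xs \<subseteq> UNIV \<and> length xs = length alpha + 1}" by (auto simp: FlU_def)
  then show ?thesis using finite_lists_length_eq[of "UNIV :: ('k^'n) set set"] finite_subset by auto
qed

lemma take_snoc_le: "i \<le> length alpha \<Longrightarrow> take i (alpha @ [a]) = take i alpha" by simp

lemma decomp1:
  assumes F: "F \<in> FlU U (alpha @ [a])" and sc: "strictly_compatible N F"
  defines "k \<equiv> length alpha"
  shows "F = butlast F @ [U]" "butlast F \<in> FlU (F ! k) alpha" "strictly_compatible N (butlast F)"
    "NV N U \<subseteq> F ! k" "F ! k \<subseteq> U"
proof -
  have len: "length F = Suc (Suc k)" using F by (simp add: FlU_def k_def)
  have last: "F ! Suc k = U" using F by (simp add: FlU_def k_def)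
  have nb: "butlast F ! i = F ! i" if "i \<le> k" for i using that len by (simp add: nth_butlast)
  show "F = butlast F @ [U]"
  proof -
    have "F \<noteq> []" using len by auto
    moreover have "last F = U" using last len by (subst last_conv_nth) auto
    ultimately show ?thesis by (metis append_butlast_last_id)
  qed
  show "butlast F \<in> FlU (F ! k) alpha"
    using F len nb unfolding FlU_def k_def[symmetric]
    by (auto simp: take_snoc_le k_def)
  show "strictly_compatible N (butlast F)"
    unfolding strictly_compatible_def
  proof (intro allI impI)
    fix i assume i: "1 \<le> i \<and> i < length (butlast F)"
    then have "i \<le> k" "i - 1 \<le> k" "i < length F" using len by auto
    then show "(*v) N ` (butlast F ! i) \<subseteq> butlast F ! (i - 1)"
      using sc i nb unfolding strictly_compatible_def by simp
  qed
  show "NV N U \<subseteq> F ! k"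
  proof -
    have "NV N (F ! Suc k) \<subseteq> F ! (Suc k - 1)"
      using sc len unfolding strictly_compatible_def by (metis le_add1 lessI plus_1_eq_Suc)
    then show ?thesis using last by simp
  qed
  show "F ! k \<subseteq> U"
    using F last unfolding FlU_def k_def by auto
qed

lemma decomp2:
  assumes F': "F' \<in> FlU W alpha" and sc: "strictly_compatible N F'" and NU: "NV N U \<subseteq> W" and WU: "W \<subseteq> U"
    and sU: "vec.subspace U" and dU: "vec.dim U = sum_list (alpha @ [a])"
  shows "F' @ [U] \<in> FlU U (alpha @ [a])" "strictly_compatible N (F' @ [U])"
proof -
  let ?k = "length alpha"
  have len: "length F' = Suc ?k" using F' by (simp add: FlU_def)
  have nth1: "(F' @ [U]) ! i = F' ! i" if "i \<le> ?k" for i using that len by (simp add: nth_append)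
  have nth2: "(F' @ [U]) ! Suc ?k = U" using len by (simp add: nth_append)
  have Wk: "F' ! ?k = W" using F' by (simp add: FlU_def)
  show "F' @ [U] \<in> FlU U (alpha @ [a])"
    unfolding FlU_def
  proof (intro CollectI conjI allI impI)
    show "length (F' @ [U]) = length (alpha @ [a]) + 1" using len by simp
  next
    fix i assume i: "i \<le> length (alpha @ [a])"
    show "vec.subspace ((F' @ [U]) ! i)"
    proof (cases "i \<le> ?k")
      case True then show ?thesis using F' nth1 by (simp add: FlU_def)
    next
      case False then have "i = Suc ?k" using i by simp
      then show ?thesis using nth2 sU dU by simp
    qed
  next
    fix i assume i: "i \<le> length (alpha @ [a])"
    show "vec.dim ((F' @ [U]) ! i) = sum_list (take i (alpha @ [a]))"
    proof (cases "i \<le> ?k")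
      case True then show ?thesis using F' nth1 by (simp add: FlU_def)
    next
      case False then have "i = Suc ?k" using i by simp
      then show ?thesis using nth2 sU dU by simp
    qed
  next
    fix i assume i: "i < length (alpha @ [a])"
    show "(F' @ [U]) ! i \<subseteq> (F' @ [U]) ! (i + 1)"
    proof (cases "i < ?k")
      case True then show ?thesis using F' nth1[of i] nth1[of "Suc i"] by (simp add: FlU_def)
    next
      case False then have "i = ?k" using i by simp
      then show ?thesis using nth1[of ?k] nth2 Wk WU by simp
    qed
  next
    show "(F' @ [U]) ! 0 = {0}" using F' nth1[of 0] by (simp add: FlU_def)
    show "(F' @ [U]) ! length (alpha @ [a]) = U" using nth2 by simp
  qed
  show "strictly_compatible N (F' @ [U])"
    unfolding strictly_compatible_def
  proof (intro allI impI)
    fix i assume i: "1 \<le> i \<and> i < length (F' @ [U])"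
    show "(*v) N ` ((F' @ [U]) ! i) \<subseteq> (F' @ [U]) ! (i - 1)"
    proof (cases "i \<le> ?k")
      case True then show ?thesis using sc i nth1[of i] nth1[of "i - 1"] len
        unfolding strictly_compatible_def by auto
    next
      case False then have "i = Suc ?k" using i len by simp
      then show ?thesis using nth1[of ?k] nth2 Wk NU by simp
    qed
  qed
qed

lemma decomp3:
  "JF_flag_is N (F' @ [U]) T \<longleftrightarrow> JF_flag_is N F' T \<and> subshape T (length F') = JF_on U N"
  unfolding JF_flag_is_def by (auto simp: nth_append less_Suc_eq)


(* ---- part 18 ---- *)


lemma JF_restr:
  assumes "length F' = Suc k"
  shows "JF_flag_is N F' (restr T k) \<longleftrightarrow> JF_flag_is N F' T"
  unfolding JF_flag_is_def using assms subshape_restr_le[of _ k T] by auto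

lemma flagsT_decomp:
  fixes N :: "'k::{field,finite}^'n^'n"
  assumes sU: "vec.subspace U" and dU: "vec.dim U = sum_list (alpha @ [a])"
    and top: "subshape T (Suc (length alpha)) = JF_on U N"
  shows "flagsT N U (alpha @ [a]) T =
    (\<Union>W\<in>FamW N U (subshape T (length alpha)). (\<lambda>F'. F' @ [U]) ` flagsT N W alpha (restr T (length alpha)))"
  (is "?L = ?R")
proof
  let ?k = "length alpha"
  show "?L \<subseteq> ?R"
  proof
    fix F assume "F \<in> ?L"
    then have F: "F \<in> FlU U (alpha @ [a])" "strictly_compatible N F" "JF_flag_is N F T"
      by (auto simp: flagsT_def)
    note d = decomp1[OF F(1,2)]
    let ?W = "F ! ?k"
    let ?F' = "butlast F"
    have lenF': "length ?F' = Suc ?k" using d(2) by (simp add: FlU_def)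
    have J: "JF_flag_is N ?F' T" using F(3) d(1) decomp3[of N ?F' U T] by metis
    have sW: "vec.subspace ?W" using d(2) unfolding FlU_def by (metis (mono_tags, lifting) mem_Collect_eq order_refl)
    have "subshape T ?k = JF_on (?F' ! ?k) N" using J lenF' by (simp add: JF_flag_is_def)
    moreover have "?F' ! ?k = ?W" using d(2) by (simp add: FlU_def)
    ultimately have "?W \<in> FamW N U (subshape T ?k)" using sW d(4,5) by (simp add: FamW_def)
    moreover have "?F' \<in> flagsT N ?W alpha (restr T ?k)"
      using d(2,3) J JF_restr[OF lenF'] by (simp add: flagsT_def)
    ultimately show "F \<in> ?R" using d(1) by blast
  qed
  show "?R \<subseteq> ?L"
  proof
    fix F assume "F \<in> ?R"
    then obtain W F' where W: "W \<in> FamW N U (subshape T ?k)" and F': "F' \<in> flagsT N W alpha (restr T ?k)"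
      and F: "F = F' @ [U]" by blast
    have W': "vec.subspace W" "NV N U \<subseteq> W" "W \<subseteq> U" using W by (auto simp: FamW_def)
    have F'': "F' \<in> FlU W alpha" "strictly_compatible N F'" "JF_flag_is N F' (restr T ?k)"
      using F' by (auto simp: flagsT_def)
    have lenF': "length F' = Suc ?k" using F''(1) by (simp add: FlU_def)
    note d = decomp2[OF F''(1,2) W'(2,3) sU dU]
    have "JF_flag_is N F T"
      unfolding F decomp3 using F''(3) JF_restr[OF lenF'] lenF' top by simp
    then show "F \<in> ?L" using d F by (simp add: flagsT_def)
  qed
qed

lemma card_flagsT:
  fixes N :: "'k::{field,finite}^'n^'n"
  assumes sU: "vec.subspace U" and dU: "vec.dim U = sum_list (alpha @ [a])"
    and top: "subshape T (Suc (length alpha)) = JF_on U N"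
  shows "card (flagsT N U (alpha @ [a]) T) =
    (\<Sum>W\<in>FamW N U (subshape T (length alpha)). card (flagsT N W alpha (restr T (length alpha))))"
proof -
  let ?k = "length alpha"
  let ?A = "\<lambda>W. (\<lambda>F'. F' @ [U]) ` flagsT N W alpha (restr T ?k)"
  have "card (\<Union>W\<in>FamW N U (subshape T ?k). ?A W) = (\<Sum>W\<in>FamW N U (subshape T ?k). card (?A W))"
  proof (rule card_UN_disjoint)
    show "finite (FamW N U (subshape T ?k))" by simp
    show "\<forall>W\<in>FamW N U (subshape T ?k). finite (?A W)"
      using finite_FlU by (auto simp: flagsT_def intro: finite_subset)
    show "\<forall>W\<in>FamW N U (subshape T ?k). \<forall>W'\<in>FamW N U (subshape T ?k). W \<noteq> W' \<longrightarrow> ?A W \<inter> ?A W' = {}"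
      by (auto simp: flagsT_def FlU_def)
  qed
  moreover have "card (?A W) = card (flagsT N W alpha (restr T ?k))" for W
    by (rule card_image) (auto simp: inj_on_def)
  ultimately show ?thesis using flagsT_decomp[OF assms] by simp
qed


(* ---- part 19 ---- *)


lemma n_part_eq:
  assumes sh: "shape_ok lam m"
  shows "n_part lam = (\<Sum>j<m. lam (Suc j) choose 2)"
proof -
  have sub: "{i. lam i \<noteq> 0} \<subseteq> {1..m}"
  proof
    fix i assume "i \<in> {i. lam i \<noteq> 0}"
    then have "lam i \<noteq> 0" by simp
    then have "i \<noteq> 0" "\<not> m < i" using sh by (cases i; auto simp: shape_ok_def)+
    then show "i \<in> {1..m}" by simp
  qed
  have "n_part lam = (\<Sum>i\<in>{1..m}. lam i choose 2)"
    unfolding n_part_def by (rule sum.mono_neutral_left) (use sub in auto)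
  also have "\<dots> = (\<Sum>j<m. lam (Suc j) choose 2)" by (simp add: sum.atLeast1_atMost_eq)
  finally show ?thesis .
qed

lemma n_comp_snoc: "n_comp (alpha @ [a]) = n_comp alpha + (a choose 2)"
  by (simp add: n_comp_def)

lemma shape_zero: "shape_ok (\<lambda>_. 0) m" by (simp add: shape_ok_def)

lemma dim_W_full:
  assumes nil: "((*v) (N::'k::field^'n^'n) ^^ m) = (\<lambda>x. 0)"
  shows "vec.dim W = Msum (JF_on W N) m"
  using Msum_JF[of W N m] ker_pow_full[OF nil order_refl] by simp

context
  fixes N :: "'k::{field,finite}^'n^'n" and m :: nat
  assumes nil: "((*v) N ^^ m) = (\<lambda>x. 0)"
begin

lemma main_i:
  "\<forall>U T. vec.subspace U \<longrightarrow> NV N U \<subseteq> U \<longrightarrow> shape_ok (JF_on U N) m \<longrightarrow> sum_list alpha = vec.dim U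
    \<longrightarrow> ssyt_content (JF_on U N) alpha T \<longrightarrow>
    wt_q (1 / real CARD('k)) T = (1 / real CARD('k)) powi (int (n_part (JF_on U N)) - int (n_comp alpha))
       * real (card (flagsT N U alpha T))"
proof (induction alpha rule: rev_induct)
  case Nil
  show ?case
  proof (intro allI impI)
    fix U T assume sU: "vec.subspace U" and "NV N U \<subseteq> U" and sh: "shape_ok (JF_on U N) m"
      and d: "sum_list [] = vec.dim U" and st: "ssyt_content (JF_on U N) [] T"
    have U0: "U = {0}" using d sU vec.subspace_0 by auto
    have dz: "vec.dim (U \<inter> X) = 0" for X using U0 by simp
    have J0: "JF_on U N = (\<lambda>_. 0)" by (intro ext) (simp only: JF_on_def dz, simp)
    have ss: "ssyt (\<lambda>_. 0) T" using st J0 by (simp add: ssyt_content_def)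
    have T0: "T = (\<lambda>_ _. 0)"
    proof (intro ext)
      fix i c show "T i c = 0" using nz_iff[OF ss shape_zero, of i c] by linarith
    qed
    have wt1: "wt_q (1 / real CARD('k)) T = 1"
      using wt_as_prod[OF ss shape_zero, of 0 "1 / real CARD('k)"] T0 by simp
    have "flagsT N U [] T = {[U]}"
    proof
      show "flagsT N U [] T \<subseteq> {[U]}"
      proof
        fix F assume "F \<in> flagsT N U [] T"
        then have "length F = 1" "F ! 0 = U" by (auto simp: flagsT_def FlU_def)
        then show "F \<in> {[U]}" by (cases F) auto
      qed
      have "[U] \<in> FlU U []" using U0 by (simp add: FlU_def)
      moreover have "strictly_compatible N [U]" by (simp add: strictly_compatible_def)
      moreover have "JF_flag_is N [U] T" using J0 subshape_0[OF ss shape_zero] by (simp add: JF_flag_is_def)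
      ultimately show "{[U]} \<subseteq> flagsT N U [] T" by (simp add: flagsT_def)
    qed
    moreover have "n_part (JF_on U N) = 0" using J0 by (simp add: n_part_def)
    ultimately show "wt_q (1 / real CARD('k)) T = (1 / real CARD('k)) powi (int (n_part (JF_on U N)) - int (n_comp []))
       * real (card (flagsT N U [] T))" using wt1 by (simp add: n_comp_def)
  qed
next
  case (snoc a alpha)
  show ?case
  proof (intro allI impI)
    fix U T assume sU: "vec.subspace U" and NUU: "NV N U \<subseteq> U" and sh: "shape_ok (JF_on U N) m"
      and d: "sum_list (alpha @ [a]) = vec.dim U" and st: "ssyt_content (JF_on U N) (alpha @ [a]) T"
    let ?Q = "real CARD('k)"
    let ?q = "1 / ?Q"
    let ?lam = "JF_on U N"
    let ?k = "length alpha"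
    let ?mu = "subshape T ?k"
    let ?T' = "restr T ?k"
    have Qpos: "0 < ?Q" using card_ge2_field[where 'k='k] by simp
    have qpos: "0 < ?q" using Qpos by simp
    have ss: "ssyt ?lam T" and hc: "has_content T (alpha @ [a])" using st by (auto simp: ssyt_content_def)
    have len: "length (alpha @ [a]) = Suc ?k" by simp
    have ss': "ssyt ?mu ?T'" by (rule ssyt_restr[OF ss sh hc len])
    have hc': "has_content ?T' alpha" using content_restr[OF ss sh hc len] by simp
    have shm: "shape_ok ?mu m" by (rule shape_mu[OF ss sh hc len])
    have top: "subshape T (Suc ?k) = ?lam" by (intro ext subshape_full[OF ss sh T_le[OF ss sh hc len]])
    have i1: "?lam (Suc (Suc i)) \<le> ?mu (Suc i)" for i by (rule inter1[OF ss sh hc len])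
    have i2: "?mu i \<le> ?lam i" for i by (rule mu_le[OF ss sh hc len])
    have mu0: "?mu 0 = 0" and mum: "\<And>j. m < j \<Longrightarrow> ?mu j = 0" using shm by (auto simp: shape_ok_def)
    have sumT: "Msum ?lam m = sum_list (alpha @ [a])" by (rule shape_sum[OF ss sh hc])
    have sumT': "Msum ?mu m = sum_list alpha" by (rule shape_sum[OF ss' shm hc'])
    \<comment> \<open>counting\<close>
    define e' where "e' = int (n_part ?mu) - int (n_comp alpha)"
    have IHW: "real (card (flagsT N W alpha ?T')) = ?Q powi e' * wt_q ?q ?T'" if W: "W \<in> FamW N U ?mu" for W
    proof -
      have W': "vec.subspace W" "NV N U \<subseteq> W" "W \<subseteq> U" "JF_on W N = ?mu" using W by (auto simp: FamW_def)
      have NW: "NV N W \<subseteq> W" using W'(2,3) by blast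
      have dW: "sum_list alpha = vec.dim W" using dim_W_full[OF nil, of W] W'(4) sumT' by simp
      have "wt_q ?q ?T' = ?q powi e' * real (card (flagsT N W alpha ?T'))"
        using snoc.IH[rule_format, OF W'(1) NW _ dW] W'(4) shm ss' hc' by (simp add: ssyt_content_def e'_def)
      moreover have "?Q powi e' * ?q powi e' = 1"
        using Qpos by (simp add: power_int_mult_distrib[symmetric])
      ultimately show ?thesis by (metis mult.assoc mult_1)
    qed
    have "real (card (flagsT N U (alpha @ [a]) T)) = (\<Sum>W\<in>FamW N U ?mu. real (card (flagsT N W alpha ?T')))"
      using card_flagsT[OF sU d[symmetric] top] by simp
    also have "\<dots> = real (card (FamW N U ?mu)) * (?Q powi e' * wt_q ?q ?T')"
      using IHW by simp
    finally have c1: "real (card (flagsT N U (alpha @ [a]) T)) = real (card (FamW N U ?mu)) * (?Q powi e' * wt_q ?q ?T')" .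
    define E where "E = (\<Sum>i<m. (?mu (Suc i) - ?lam (Suc (Suc i))) * (Msum ?lam (Suc i) - Msum ?mu (Suc i)))"
    define P where "P = (\<Prod>i<m. qbinom ?q (?lam (Suc i) - ?lam (Suc (Suc i))) (?lam (Suc i) - ?mu (Suc i)))"
    have cF: "real (card (FamW N U ?mu)) = ?Q ^ E * P"
      unfolding E_def P_def by (rule card_FamW_closed[OF sU NUU nil mu0 mum i1 i2])
    have wT: "wt_q ?q T = wt_q ?q ?T' * P"
      using wt_decomp[OF ss sh hc len qpos] unfolding P_def by (simp add: prod.atLeast1_atMost_eq)
    \<comment> \<open>exponents\<close>
    have lamm: "?lam (Suc m) = 0" using sh by (simp add: shape_ok_def)
    have Eint: "int E = (\<Sum>j<m. int (?lam (Suc j) choose 2)) - (\<Sum>j<m. int (?mu (Suc j) choose 2))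
       - int ((Msum ?lam m - Msum ?mu m) choose 2)"
      unfolding E_def by (rule exp_identity[OF lamm i1 i2])
    have aeq: "Msum ?lam m - Msum ?mu m = a" using sumT sumT' by simp
    have nl: "int (n_part ?lam) = (\<Sum>j<m. int (?lam (Suc j) choose 2))" using n_part_eq[OF sh] by simp
    have nm: "int (n_part ?mu) = (\<Sum>j<m. int (?mu (Suc j) choose 2))" using n_part_eq[OF shm] by simp
    have expo: "int E + e' = int (n_part ?lam) - int (n_comp (alpha @ [a]))"
      using Eint aeq nl nm unfolding e'_def n_comp_snoc by simp
    have "real (card (flagsT N U (alpha @ [a]) T)) = ?Q powi (int E + e') * wt_q ?q T"
      using c1 cF wT Qpos by (simp add: power_int_add)
    moreover have "?q powi (int E + e') * ?Q powi (int E + e') = 1"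
      using Qpos by (simp add: power_int_mult_distrib[symmetric])
    ultimately show "wt_q ?q T = ?q powi (int (n_part ?lam) - int (n_comp (alpha @ [a]))) * real (card (flagsT N U (alpha @ [a]) T))"
      using expo by (metis mult.assoc mult_1)
  qed
qed

end


(* ---- part 20 ---- *)


context
  fixes N :: "'k::{field,finite}^'n^'n" and m :: nat
  assumes nil: "((*v) N ^^ m) = (\<lambda>x. 0)"
begin

lemma main_ex:
  "\<forall>U F. vec.subspace U \<longrightarrow> NV N U \<subseteq> U \<longrightarrow> shape_ok (JF_on U N) m \<longrightarrow> sum_list alpha = vec.dim U
    \<longrightarrow> F \<in> flagsA N U alpha \<longrightarrow> (\<exists>T. ssyt_content (JF_on U N) alpha T \<and> JF_flag_is N F T)"
proof (induction alpha rule: rev_induct)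
  case Nil
  show ?case
  proof (intro allI impI)
    fix U F assume sU: "vec.subspace U" and "NV N U \<subseteq> U" and sh: "shape_ok (JF_on U N) m"
      and d: "sum_list [] = vec.dim U" and F: "F \<in> flagsA N U []"
    have U0: "U = {0}" using d sU vec.subspace_0 by auto
    have dz: "vec.dim (U \<inter> X) = 0" for X using U0 by simp
    have J0: "JF_on U N = (\<lambda>_. 0)" by (intro ext) (simp only: JF_on_def dz, simp)
    let ?T = "\<lambda>(_::nat) (_::nat). 0::nat"
    have ss: "ssyt (\<lambda>_. 0) ?T" by (simp add: ssyt_def in_shape_def)
    have hc: "has_content ?T []" by (simp add: has_content_def)
    have "length F = 1" using F by (simp add: flagsA_def FlU_def)
    then have "JF_flag_is N F ?T" using J0 subshape_0[OF ss shape_zero] F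
      by (auto simp: JF_flag_is_def flagsA_def FlU_def)
    then show "\<exists>T. ssyt_content (JF_on U N) [] T \<and> JF_flag_is N F T"
      using ss hc J0 by (auto simp: ssyt_content_def)
  qed
next
  case (snoc a alpha)
  show ?case
  proof (intro allI impI)
    fix U F assume sU: "vec.subspace U" and NUU: "NV N U \<subseteq> U" and sh: "shape_ok (JF_on U N) m"
      and d: "sum_list (alpha @ [a]) = vec.dim U" and F: "F \<in> flagsA N U (alpha @ [a])"
    let ?lam = "JF_on U N"
    let ?k = "length alpha"
    let ?W = "F ! ?k"
    let ?F' = "butlast F"
    let ?mu = "JF_on ?W N"
    have F1: "F \<in> FlU U (alpha @ [a])" "strictly_compatible N F" using F by (auto simp: flagsA_def)
    note dc = decomp1[OF F1]
    have sW: "vec.subspace ?W" using dc(2) unfolding FlU_def by (metis (mono_tags, lifting) mem_Collect_eq order_refl)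
    have dW: "vec.dim ?W = sum_list alpha" using dc(2) unfolding FlU_def by (metis (mono_tags, lifting) mem_Collect_eq order_refl take_all)
    have NW: "NV N ?W \<subseteq> ?W" using dc(4,5) by blast
    have i1: "?mu (Suc i) \<le> ?lam (Suc i)" for i by (rule interlace(2)[OF sU NUU sW dc(4,5)])
    have i2: "?lam (Suc (Suc i)) \<le> ?mu (Suc i)" for i by (rule interlace(1)[OF sU NUU sW dc(4,5)])
    have shm: "shape_ok ?mu m"
      unfolding shape_ok_def
    proof (intro conjI allI impI)
      show "?mu 0 = 0" by simp
      fix i show "?mu (Suc (Suc i)) \<le> ?mu (Suc i)" using i1[of "Suc i"] i2[of i] by simp
    next
      fix i :: nat assume "m < i" then show "?mu i = 0" by (rule JF_on_vanish[OF nil])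
    qed
    obtain T' where T': "ssyt_content ?mu alpha T'" "JF_flag_is N ?F' T'"
      using snoc.IH[rule_format, OF sW NW shm dW[symmetric]] dc(2,3) by (auto simp: flagsA_def)
    have ss': "ssyt ?mu T'" and hc': "has_content T' alpha" using T'(1) by (auto simp: ssyt_content_def)
    have mu_le': "?mu i \<le> ?lam i" for i using i1 by (cases i) auto
    have aeq: "a = (\<Sum>i\<in>{1..m}. ?lam i - ?mu i)"
    proof -
      have "Msum ?lam m = vec.dim U" using dim_W_full[OF nil, of U] by simp
      moreover have "Msum ?mu m = vec.dim ?W" using dim_W_full[OF nil, of ?W] by simp
      moreover have "(\<Sum>i\<in>{1..m}. ?lam i - ?mu i) = Msum ?lam m - Msum ?mu m"
        unfolding Msum_def using mu_le' by (simp add: sum_subtractf_nat)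
      ultimately show ?thesis using d dW by simp
    qed
    let ?T = "extT T' ?mu ?lam ?k"
    have ssT: "ssyt ?lam ?T" by (rule ssyt_ext[OF ss' shm hc' refl sh i1 i2])
    have hcT: "has_content ?T (alpha @ [a])" by (rule content_ext[OF ss' shm hc' refl sh i1 i2 aeq])
    have lenF': "length ?F' = Suc ?k" using dc(2) by (simp add: FlU_def)
    have "JF_flag_is N ?F' ?T"
      using JF_restr[OF lenF', of N ?T] restr_ext[OF ss' shm hc' refl sh i1 i2] T'(2) by simp
    moreover have "subshape ?T (length ?F') = ?lam"
      using subshape_ext_top[OF ss' shm hc' refl sh i1 i2] lenF' by simp
    ultimately have "JF_flag_is N F ?T" using dc(1) decomp3[of N ?F' U ?T] by metis
    then show "\<exists>T. ssyt_content ?lam (alpha @ [a]) T \<and> JF_flag_is N F T"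
      using ssT hcT by (auto simp: ssyt_content_def)
  qed
qed

end


(* ---- part 21 ---- *)


theorem theorem5p8:
  fixes N :: "'k::{field,finite}^'n^'n"
    and lam :: "nat \<Rightarrow> nat"
    and alpha :: "nat list"
  defines "q \<equiv> 1 / real CARD('k)"
  assumes "is_partition_of lam CARD('n)"
    and "nilpotent_mat N"
    and "JF N = lam"
    and "sum_list alpha = CARD('n)"
  shows "(\<forall>T. ssyt_content lam alpha T \<longrightarrow>
           wt_q q T = q powi (int (n_part lam) - int (n_comp alpha)) *
             real (card {F \<in> Fl alpha. strictly_compatible N F \<and> JF_flag_is N F T})) \<and>
         (\<Sum>T\<in>{T. ssyt_content lam alpha T}. wt_q q T) =
           q powi (int (n_part lam) - int (n_comp alpha)) *
             real (card {F \<in> Fl alpha. strictly_compatible N F})"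
proof -
  note part = assms(2) and nilp = assms(3) and JFl = assms(4) and sa = assms(5)
  obtain m where nil: "((*v) N ^^ m) = (\<lambda>x. 0)" using nilp by (auto simp: nilpotent_mat_def)
  have lamU: "JF_on UNIV N = lam" using JFl by (simp add: JF_def)
  have sh: "shape_ok lam m"
    unfolding shape_ok_def
  proof (intro conjI allI impI)
    show "lam 0 = 0" using part by (simp add: is_partition_of_def)
    fix i show "lam (Suc (Suc i)) \<le> lam (Suc i)" using part by (simp add: is_partition_of_def)
  next
    fix i :: nat assume "m < i" then show "lam i = 0" using JF_on_vanish[OF nil] lamU by metis
  qed
  have dU: "sum_list alpha = vec.dim (UNIV :: ('k^'n) set)"
    using sa by (simp add: card_cart_basis)
  have NU: "NV N UNIV \<subseteq> UNIV" by simp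
  let ?e = "int (n_part lam) - int (n_comp alpha)"
  have fl: "{F \<in> Fl alpha. strictly_compatible N F \<and> JF_flag_is N F T} = flagsT N UNIV alpha T" for T
    by (simp add: flagsT_def Fl_FlU)
  have flA: "{F \<in> Fl alpha. strictly_compatible N F} = flagsA N UNIV alpha"
    by (simp add: flagsA_def Fl_FlU)
  have I: "wt_q q T = q powi ?e * real (card (flagsT N UNIV alpha T))" if "ssyt_content lam alpha T" for T
    using main_i[OF nil, rule_format, OF vec.subspace_UNIV NU, of alpha T] that sh dU lamU
    unfolding q_def by simp
  let ?S = "{T. ssyt_content lam alpha T}"
  have finS: "finite ?S" by (rule finite_ssyt[OF sh])
  have un: "flagsA N UNIV alpha = (\<Union>T\<in>?S. flagsT N UNIV alpha T)"
  proof
    show "flagsA N UNIV alpha \<subseteq> (\<Union>T\<in>?S. flagsT N UNIV alpha T)"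
    proof
      fix F assume F: "F \<in> flagsA N UNIV alpha"
      obtain T where T: "ssyt_content lam alpha T" "JF_flag_is N F T"
        using main_ex[OF nil, rule_format, OF vec.subspace_UNIV NU, of alpha F] F sh dU lamU by auto
      then show "F \<in> (\<Union>T\<in>?S. flagsT N UNIV alpha T)" using F by (auto simp: flagsA_def flagsT_def)
    qed
    show "(\<Union>T\<in>?S. flagsT N UNIV alpha T) \<subseteq> flagsA N UNIV alpha" by (auto simp: flagsA_def flagsT_def)
  qed
  have disj: "flagsT N UNIV alpha T1 \<inter> flagsT N UNIV alpha T2 = {}" if "T1 \<in> ?S" "T2 \<in> ?S" "T1 \<noteq> T2" for T1 T2
  proof (rule ccontr)
    assume "flagsT N UNIV alpha T1 \<inter> flagsT N UNIV alpha T2 \<noteq> {}"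
    then obtain F where F: "F \<in> flagsT N UNIV alpha T1" "F \<in> flagsT N UNIV alpha T2" by blast
    have len: "length F = Suc (length alpha)" using F(1) by (simp add: flagsT_def FlU_def)
    have s1: "ssyt lam T1" "has_content T1 alpha" and s2: "ssyt lam T2" "has_content T2 alpha"
      using that by (auto simp: ssyt_content_def)
    have "T1 = T2"
    proof (rule ssyt_unique[OF s1(1) s2(1) sh])
      show "T1 i c \<le> length alpha" for i c by (rule entries_le[OF s1(1) sh s1(2)])
      show "T2 i c \<le> length alpha" for i c by (rule entries_le[OF s2(1) sh s2(2)])
      fix j assume "j \<le> length alpha"
      then show "subshape T1 j = subshape T2 j" using F len by (auto simp: flagsT_def JF_flag_is_def)
    qed
    then show False using that by simp
  qed
  have "card (flagsA N UNIV alpha) = (\<Sum>T\<in>?S. card (flagsT N UNIV alpha T))"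
    unfolding un
  proof (rule card_UN_disjoint[OF finS])
    show "\<forall>T\<in>?S. finite (flagsT N UNIV alpha T)"
      using finite_FlU[of "UNIV :: ('k^'n) set" alpha] by (auto simp: flagsT_def)
    show "\<forall>T1\<in>?S. \<forall>T2\<in>?S. T1 \<noteq> T2 \<longrightarrow> flagsT N UNIV alpha T1 \<inter> flagsT N UNIV alpha T2 = {}"
      using disj by blast
  qed
  then have "q powi ?e * real (card (flagsA N UNIV alpha)) = (\<Sum>T\<in>?S. q powi ?e * real (card (flagsT N UNIV alpha T)))"
    by (simp add: sum_distrib_left)
  also have "\<dots> = (\<Sum>T\<in>?S. wt_q q T)" using I by simp
  finally show ?thesis using I unfolding fl flA by simp
qed


end
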